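(* Let $K$ be a field and let $\tau \ge 2$, $M \ge 1$, $d \ge 1$ be integers. Let $b_1,\dots,b_M$, $c_1,\dots,c_M$, $r_1,\dots,r_M$, $s_1,\dots,s_M$ be integers with $0 \le c_i \le b_i$ and $1 \le s_i \le r_i \le d$ for all $1 \le i \le M$. Let $\mathcal{A} \subset \mathbb{N}^d$ be the finite set (configuration) of all $(f_1,\dots,f_d) \in \mathbb{N}^d$ such that $\sum_{j=1}^d f_j = \tau$ and $c_i \le \sum_{j=s_i}^{r_i} f_j \le b_i$ for all $1 \le i \le M$. Let $K[Y]$ be the polynomial ring over $K$ in the variables $y_{j_1 j_2 \cdots j_\tau}$, indexed by all weakly increasing sequences $1 \le j_1 \le j_2 \le \cdots \le j_\tau \le d$ such that the exponent vector of the monomial $\prod_{k=1}^{\tau} q_{j_k}$ belongs to $\mathcal{A}$, and let $I_{\mathcal{A}}$ be the kernel of the $K$-algebra homomorphism $\pi: K[Y] \to K[q_1,\dots,q_d]$, $\pi(y_{j_1\cdots j_\tau}) = \prod_{k=1}^\tau q_{j_k}$ (the toric ideal of $\mathcal{A}$). Then there exists a monomial order on $K[Y]$ such that the set $\mathcal{G}$ of all binomials $$ y_{\alpha_1 \alpha_2 \cdots \alpha_\tau}\, y_{\beta_1 \beta_2 \cdots \beta_\tau} - y_{\gamma_1 \gamma_3 \cdots \gamma_{2\tau-1}}\, y_{\gamma_2 \gamma_4 \cdots \gamma_{2\tau}}, $$ where $y_{\alpha_1\cdots\alpha_\tau}y_{\beta_1\cdots\beta_\tau}$ ranges over the non-sorted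 quadratic monomials of $K[Y]$ and $\gamma_1\gamma_2\cdots\gamma_{2\tau} = \mathrm{sort}(\alpha_1\beta_1\alpha_2\beta_2\cdots\alpha_\tau\beta_\tau)$, is the reduced Gröbner basis of $I_{\mathcal{A}}$ with respect to this order; the corresponding initial ideal is generated by squarefree quadratic (non-sorted) monomials. In particular, the set of integer vectors corresponding to the binomials in $\mathcal{G}$ is a Markov basis for $\mathcal{A}$, and it is minimal as a Markov basis.
   Context: $\mathbb{N} = \{0,1,2,\dots\}$. For a string over the alphabet $\{1,\dots,d\}$, $\mathrm{sort}(\cdot)$ denotes the string obtained by rearranging its letters into weakly increasing order. A monomial $y_{\alpha_1\cdots\alpha_\tau} y_{\beta_1\cdots\beta_\tau}\cdots y_{\gamma_1\cdots\gamma_\tau}$ in $K[Y]$ is called sorted if $\alpha_1 \le \beta_1 \le \cdots \le \gamma_1 \le \alpha_2 \le \beta_2 \le \cdots \le \gamma_2 \le \cdots \le \alpha_\tau \le \beta_\tau \le \cdots \le \gamma_\tau$. Write $\mathcal{A} = \{\mathbf{a}_1,\dots,\mathbf{a}_\nu\}$, identified with the $d \times \nu$ matrix $A$ whose columns are the $\mathbf{a}_i$; the variables of $K[Y]$ correspond bijectively to the columns of $A$. A move is a vector $\mathbf{z} \in \mathbb{Z}^\nu$ with $A\mathbf{z} = \mathbf{0}$; a binomial $\prod_i y_i^{z^+_i} - \prod_i y_i^{z^-_i}$ in $I_{\mathcal{A}}$ corresponds to the move $\mathbf{z} = \mathbf{z}^+ - \mathbf{z}^-$ (with $\mathbf{z}^\pm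 \in \mathbb{N}^\nu$). A finite set $\mathcal{B}$ of moves is a Markov basis for $\mathcal{A}$ if for every $\mathbf{t}$ the fiber $\{\mathbf{x} \in \mathbb{N}^\nu : A\mathbf{x} = \mathbf{t}\}$ is connected by steps $\mathbf{x} \mapsto \mathbf{x} \pm \mathbf{z}$, $\mathbf{z} \in \mathcal{B}$, staying in $\mathbb{N}^\nu$; it is minimal if no proper subset is a Markov basis. A Gröbner basis $\mathcal{G}$ is reduced if no monomial of any $g \in \mathcal{G}$ is divisible by the initial monomial of another $g' \in \mathcal{G}$. *)

theory Defs
  imports Main "HOL-Library.Multiset" "HOL-Library.Poly_Mapping"
begin

(* Exponent vectors f : nat => nat (only indices 1..d used) *)
definition inConfig :: "nat \<Rightarrow> nat \<Rightarrow> nat \<Rightarrow> (nat \<Rightarrow> int) \<Rightarrow> (nat \<Rightarrow> int)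
      \<Rightarrow> (nat \<Rightarrow> nat) \<Rightarrow> (nat \<Rightarrow> nat) \<Rightarrow> (nat \<Rightarrow> nat) \<Rightarrow> bool" where
  "inConfig d \<tau> M b c r s f \<longleftrightarrow>
     (\<forall>j. j \<notin> {1..d} \<longrightarrow> f j = 0) \<and>
     (\<Sum>j=1..d. f j) = \<tau> \<and>
     (\<forall>i\<in>{1..M}. c i \<le> int (\<Sum>j=s i..r i. f j) \<and> int (\<Sum>j=s i..r i. f j) \<le> b i)"

definition expvec :: "nat list \<Rightarrow> nat \<Rightarrow> nat" where
  "expvec v = (\<lambda>j. count (mset v) j)"

definition Vars :: "nat \<Rightarrow> nat \<Rightarrow> nat \<Rightarrow> (nat \<Rightarrow> int) \<Rightarrow> (nat \<Rightarrow> int)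
      \<Rightarrow> (nat \<Rightarrow> nat) \<Rightarrow> (nat \<Rightarrow> nat) \<Rightarrow> nat list set" where
  "Vars d \<tau> M b c r s = {v. length v = \<tau> \<and> sorted v \<and> set v \<subseteq> {1..d}
                              \<and> inConfig d \<tau> M b c r s (expvec v)}"

(* monomials of K[Y]: multisets of variables; polynomials: monomial \<Rightarrow>\<^sub>0 'k *)
type_synonym monom = "nat list multiset"
type_synonym 'k ypoly = "monom \<Rightarrow>\<^sub>0 'k"

definition is_monom :: "nat list set \<Rightarrow> monom \<Rightarrow> bool" where
  "is_monom V m \<longleftrightarrow> set_mset m \<subseteq> V"

definition inKY :: "nat list set \<Rightarrow> 'k::zero ypoly \<Rightarrow> bool" where
  "inKY V p \<longleftrightarrow> (\<forall>m\<in>Poly_Mapping.keys p. is_monom V m)"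

(* pi : K[Y] -> K[q_1..q_d], y_{j_1..j_tau} |-> q_{j_1}...q_{j_tau};
   monomials of K[q] represented as multisets of indices *)
definition piY :: "'k::comm_monoid_add ypoly \<Rightarrow> (nat multiset \<Rightarrow>\<^sub>0 'k)" where
  "piY p = (\<Sum>m\<in>Poly_Mapping.keys p. Poly_Mapping.single (\<Sum>\<^sub># (image_mset mset m)) (Poly_Mapping.lookup p m))"

definition toricIdeal :: "nat list set \<Rightarrow> 'k::field ypoly set" where
  "toricIdeal V = {p. inKY V p \<and> piY p = 0}"

definition monomial_order :: "nat list set \<Rightarrow> (monom \<Rightarrow> monom \<Rightarrow> bool) \<Rightarrow> bool" where
  "monomial_order V le \<longleftrightarrow>
     (\<forall>m. is_monom V m \<longrightarrow> le m m) \<and>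
     (\<forall>m1 m2. is_monom V m1 \<and> is_monom V m2 \<longrightarrow> le m1 m2 \<or> le m2 m1) \<and>
     (\<forall>m1 m2. is_monom V m1 \<and> is_monom V m2 \<and> le m1 m2 \<and> le m2 m1 \<longrightarrow> m1 = m2) \<and>
     (\<forall>m1 m2 m3. is_monom V m1 \<and> is_monom V m2 \<and> is_monom V m3 \<and> le m1 m2 \<and> le m2 m3
                   \<longrightarrow> le m1 m3) \<and>
     (\<forall>m. is_monom V m \<longrightarrow> le {#} m) \<and>
     (\<forall>m1 m2 m. is_monom V m1 \<and> is_monom V m2 \<and> is_monom V m \<and> le m1 m2
                   \<longrightarrow> le (m1 + m) (m2 + m))"

definition lm :: "(monom \<Rightarrow> monom \<Rightarrow> bool) \<Rightarrow> 'k::zero ypoly \<Rightarrow> monom" where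
  "lm le p = (THE m. m \<in> Poly_Mapping.keys p \<and> (\<forall>m'\<in>Poly_Mapping.keys p. le m' m))"

definition groebner_basis :: "(monom \<Rightarrow> monom \<Rightarrow> bool) \<Rightarrow> 'k::field ypoly set \<Rightarrow> 'k ypoly set \<Rightarrow> bool" where
  "groebner_basis le I G \<longleftrightarrow> finite G \<and> G \<subseteq> I \<and> 0 \<notin> G \<and>
     (\<forall>f\<in>I. f \<noteq> 0 \<longrightarrow> (\<exists>g\<in>G. lm le g \<subseteq># lm le f))"

definition reduced_groebner_basis :: "(monom \<Rightarrow> monom \<Rightarrow> bool) \<Rightarrow> 'k::field ypoly set \<Rightarrow> 'k ypoly set \<Rightarrow> bool" where
  "reduced_groebner_basis le I G \<longleftrightarrow> groebner_basis le I G \<and>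
     (\<forall>g\<in>G. Poly_Mapping.lookup g (lm le g) = 1) \<and>
     (\<forall>g\<in>G. \<forall>g'\<in>G. g \<noteq> g' \<longrightarrow> (\<forall>m\<in>Poly_Mapping.keys g. \<not> lm le g' \<subseteq># m))"

(* sorted monomial: factors can be ordered v_1,...,v_k so that
   v_1!0 \<le> v_2!0 \<le> ... \<le> v_k!0 \<le> v_1!1 \<le> ... *)
definition sorted_monom :: "monom \<Rightarrow> bool" where
  "sorted_monom m \<longleftrightarrow> (\<exists>ls. mset ls = m \<and> sorted (concat (transpose ls)))"

(* gamma = sort(alpha_1 beta_1 ... alpha_tau beta_tau); odd and even positions *)
definition gam :: "nat list \<Rightarrow> nat list \<Rightarrow> nat list" where
  "gam \<alpha> \<beta> = sort (concat (transpose [\<alpha>, \<beta>]))"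

definition oddpart :: "nat \<Rightarrow> nat list \<Rightarrow> nat list \<Rightarrow> nat list" where
  "oddpart \<tau> \<alpha> \<beta> = map (\<lambda>k. gam \<alpha> \<beta> ! (2*k)) [0..<\<tau>]"

definition evenpart :: "nat \<Rightarrow> nat list \<Rightarrow> nat list \<Rightarrow> nat list" where
  "evenpart \<tau> \<alpha> \<beta> = map (\<lambda>k. gam \<alpha> \<beta> ! (2*k+1)) [0..<\<tau>]"

definition nonsorted_quad :: "nat list set \<Rightarrow> nat list \<Rightarrow> nat list \<Rightarrow> bool" where
  "nonsorted_quad V \<alpha> \<beta> \<longleftrightarrow> \<alpha> \<in> V \<and> \<beta> \<in> V \<and> \<not> sorted_monom {#\<alpha>, \<beta>#}"

definition binom :: "nat \<Rightarrow> nat list \<Rightarrow> nat list \<Rightarrow> 'k::comm_ring_1 ypoly" where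
  "binom \<tau> \<alpha> \<beta> = Poly_Mapping.single {#\<alpha>, \<beta>#} 1
                  - Poly_Mapping.single {#oddpart \<tau> \<alpha> \<beta>, evenpart \<tau> \<alpha> \<beta>#} 1"

definition Gset :: "nat list set \<Rightarrow> nat \<Rightarrow> 'k::comm_ring_1 ypoly set" where
  "Gset V \<tau> = {binom \<tau> \<alpha> \<beta> | \<alpha> \<beta>. nonsorted_quad V \<alpha> \<beta>}"

definition binom_move :: "nat \<Rightarrow> nat list \<Rightarrow> nat list \<Rightarrow> nat list \<Rightarrow> int" where
  "binom_move \<tau> \<alpha> \<beta> = (\<lambda>v. int (count {#\<alpha>, \<beta>#} v)
                         - int (count {#oddpart \<tau> \<alpha> \<beta>, evenpart \<tau> \<alpha> \<beta>#} v))"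

definition Bset :: "nat list set \<Rightarrow> nat \<Rightarrow> (nat list \<Rightarrow> int) set" where
  "Bset V \<tau> = {binom_move \<tau> \<alpha> \<beta> | \<alpha> \<beta>. nonsorted_quad V \<alpha> \<beta>}"

(* Markov bases. Vectors in Z^nu: functions on nat list vanishing outside V *)
definition Amap :: "nat list set \<Rightarrow> (nat list \<Rightarrow> int) \<Rightarrow> nat \<Rightarrow> int" where
  "Amap V x = (\<lambda>j. \<Sum>v\<in>V. x v * int (expvec v j))"

definition is_move :: "nat list set \<Rightarrow> (nat list \<Rightarrow> int) \<Rightarrow> bool" where
  "is_move V z \<longleftrightarrow> (\<forall>v. v \<notin> V \<longrightarrow> z v = 0) \<and> Amap V z = (\<lambda>_. 0)"

definition fiber :: "nat list set \<Rightarrow> (nat \<Rightarrow> int) \<Rightarrow> (nat list \<Rightarrow> int) set" where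
  "fiber V t = {x. (\<forall>v. 0 \<le> x v) \<and> (\<forall>v. v \<notin> V \<longrightarrow> x v = 0) \<and> Amap V x = t}"

definition markov_step :: "nat list set \<Rightarrow> (nat \<Rightarrow> int) \<Rightarrow> (nat list \<Rightarrow> int) set
      \<Rightarrow> ((nat list \<Rightarrow> int) \<times> (nat list \<Rightarrow> int)) set" where
  "markov_step V t B = {(x, y). x \<in> fiber V t \<and> y \<in> fiber V t \<and>
                                 (\<exists>z\<in>B. y = (\<lambda>v. x v + z v) \<or> y = (\<lambda>v. x v - z v))}"

definition markov_basis :: "nat list set \<Rightarrow> (nat list \<Rightarrow> int) set \<Rightarrow> bool" where
  "markov_basis V B \<longleftrightarrow> finite B \<and> (\<forall>z\<in>B. is_move V z) \<and>
     (\<forall>t. \<forall>x\<in>fiber V t. \<forall>y\<in>fiber V t. (x, y) \<in> (markov_step V t B)\<^sup>*)"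

definition minimal_markov_basis :: "nat list set \<Rightarrow> (nat list \<Rightarrow> int) set \<Rightarrow> bool" where
  "minimal_markov_basis V B \<longleftrightarrow> markov_basis V B \<and> (\<forall>B'. B' \<subset> B \<longrightarrow> \<not> markov_basis V B')"

end

theory Submission
  imports Defs "HOL-Library.List_Lexorder" "HOL-Library.Multiset_Order" "HOL-Library.Product_Lexorder"
begin

fun il :: "'a list \<Rightarrow> 'a list \<Rightarrow> 'a list" where
  "il (x#xs) (y#ys) = x # y # il xs ys"
| "il _ _ = []"

lemma ct_il: "length xs = length ys \<Longrightarrow> concat (transpose [xs, ys]) = il xs ys"
  apply (induction xs arbitrary: ys)
   apply simp
  subgoal for a xs ys by (cases ys) auto
  done

lemma il_len: "length xs = length ys \<Longrightarrow> length (il xs ys) = 2 * length xs"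
  apply (induction xs arbitrary: ys)
   apply simp
  subgoal for a xs ys by (cases ys) auto
  done

lemma il_nth0: "length xs = length ys \<Longrightarrow> i < length xs \<Longrightarrow> il xs ys ! (2*i) = xs ! i"
  apply (induction xs arbitrary: ys i)
   apply simp
  subgoal for a xs ys i by (cases ys; cases i) auto
  done

lemma il_nth1: "length xs = length ys \<Longrightarrow> i < length xs \<Longrightarrow> il xs ys ! (2*i+1) = ys ! i"
  apply (induction xs arbitrary: ys i)
   apply simp
  subgoal for a xs ys i by (cases ys; cases i) auto
  done

lemma il_mset: "length xs = length ys \<Longrightarrow> mset (il xs ys) = mset xs + mset ys"
  apply (induction xs arbitrary: ys)
   apply simp
  subgoal for a xs ys by (cases ys) auto
  done


lemma gam_il: "length \<alpha> = length \<beta> \<Longrightarrow> gam \<alpha> \<beta> = sort (il \<alpha> \<beta>)"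
  by (simp add: gam_def ct_il)

lemma gam_sorted: "sorted (gam \<alpha> \<beta>)"
  by (simp add: gam_def)

lemma gam_mset: "length \<alpha> = length \<beta> \<Longrightarrow> mset (gam \<alpha> \<beta>) = mset \<alpha> + mset \<beta>"
  by (simp add: gam_il il_mset)

lemma gam_len: "length \<alpha> = length \<beta> \<Longrightarrow> length (gam \<alpha> \<beta>) = 2 * length \<alpha>"
  by (simp add: gam_il il_len)

lemma gam_sym: "length \<alpha> = length \<beta> \<Longrightarrow> gam \<alpha> \<beta> = gam \<beta> \<alpha>"
proof -
  assume l: "length \<alpha> = length \<beta>"
  have "sort (il \<beta> \<alpha>) = gam \<alpha> \<beta>"
    by (rule properties_for_sort) (use l in \<open>simp_all add: gam_mset il_mset gam_sorted add.commute\<close>)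
  then show ?thesis using l by (simp add: gam_il)
qed

lemma oddpart_sym: "length \<alpha> = length \<beta> \<Longrightarrow> oddpart \<tau> \<alpha> \<beta> = oddpart \<tau> \<beta> \<alpha>"
  by (simp add: oddpart_def gam_sym)

lemma evenpart_sym: "length \<alpha> = length \<beta> \<Longrightarrow> evenpart \<tau> \<alpha> \<beta> = evenpart \<tau> \<beta> \<alpha>"
  by (simp add: evenpart_def gam_sym)

lemma oe_len: "length (oddpart \<tau> \<alpha> \<beta>) = \<tau>" "length (evenpart \<tau> \<alpha> \<beta>) = \<tau>"
  by (simp_all add: oddpart_def evenpart_def)

lemma oe_il:
  assumes "length \<alpha> = \<tau>" "length \<beta> = \<tau>"
  shows "il (oddpart \<tau> \<alpha> \<beta>) (evenpart \<tau> \<alpha> \<beta>) = gam \<alpha> \<beta>"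
proof (rule nth_equalityI)
  show "length (il (oddpart \<tau> \<alpha> \<beta>) (evenpart \<tau> \<alpha> \<beta>)) = length (gam \<alpha> \<beta>)"
    using assms by (simp add: il_len gam_len oddpart_def evenpart_def)
  fix p assume "p < length (il (oddpart \<tau> \<alpha> \<beta>) (evenpart \<tau> \<alpha> \<beta>))"
  then have p: "p < 2*\<tau>" using assms by (simp add: il_len oddpart_def evenpart_def)
  have "p = 2 * (p div 2) \<or> p = 2 * (p div 2) + 1" by presburger
  then consider (ev) "p = 2 * (p div 2)" | (od) "p = 2 * (p div 2) + 1" by blast
  then show "il (oddpart \<tau> \<alpha> \<beta>) (evenpart \<tau> \<alpha> \<beta>) ! p = gam \<alpha> \<beta> ! p"
  proof cases
    case ev
    have q: "p div 2 < \<tau>" using p by simp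
    have "il (oddpart \<tau> \<alpha> \<beta>) (evenpart \<tau> \<alpha> \<beta>) ! p
        = il (oddpart \<tau> \<alpha> \<beta>) (evenpart \<tau> \<alpha> \<beta>) ! (2 * (p div 2))"
      using ev by (rule arg_cong)
    also have "\<dots> = oddpart \<tau> \<alpha> \<beta> ! (p div 2)" by (rule il_nth0) (simp_all add: oe_len q)
    also have "\<dots> = gam \<alpha> \<beta> ! (2 * (p div 2))" by (simp add: oddpart_def q)
    also have "\<dots> = gam \<alpha> \<beta> ! p" using ev[symmetric] by (rule arg_cong)
    finally show ?thesis .
  next
    case od
    have q: "p div 2 < \<tau>" using p by simp
    have "il (oddpart \<tau> \<alpha> \<beta>) (evenpart \<tau> \<alpha> \<beta>) ! p
        = il (oddpart \<tau> \<alpha> \<beta>) (evenpart \<tau> \<alpha> \<beta>) ! (2 * (p div 2) + 1)"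
      using od by (rule arg_cong)
    also have "\<dots> = evenpart \<tau> \<alpha> \<beta> ! (p div 2)" by (rule il_nth1) (simp_all add: oe_len q)
    also have "\<dots> = gam \<alpha> \<beta> ! (2 * (p div 2) + 1)" by (simp add: evenpart_def q)
    also have "\<dots> = gam \<alpha> \<beta> ! p" using od[symmetric] by (rule arg_cong)
    finally show ?thesis .
  qed
qed

lemma oe_mset:
  assumes "length \<alpha> = \<tau>" "length \<beta> = \<tau>"
  shows "mset (oddpart \<tau> \<alpha> \<beta>) + mset (evenpart \<tau> \<alpha> \<beta>) = mset \<alpha> + mset \<beta>"
  using oe_il[OF assms] il_mset[of "oddpart \<tau> \<alpha> \<beta>" "evenpart \<tau> \<alpha> \<beta>"] gam_mset[of \<alpha> \<beta>] assms
  by (simp add: oe_len)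

lemma oe_sorted:
  assumes "length \<alpha> = \<tau>" "length \<beta> = \<tau>"
  shows "sorted (oddpart \<tau> \<alpha> \<beta>)" "sorted (evenpart \<tau> \<alpha> \<beta>)"
proof -
  have s: "sorted (gam \<alpha> \<beta>)" by (rule gam_sorted)
  have l: "length (gam \<alpha> \<beta>) = 2*\<tau>" using assms by (simp add: gam_len)
  show "sorted (oddpart \<tau> \<alpha> \<beta>)"
  proof (subst sorted_iff_nth_mono, intro allI impI)
    fix i j assume ij: "i \<le> j" "j < length (oddpart \<tau> \<alpha> \<beta>)"
    then have j: "j < \<tau>" by (simp add: oe_len)
    have "gam \<alpha> \<beta> ! (2*i) \<le> gam \<alpha> \<beta> ! (2*j)"
      by (rule sorted_nth_mono[OF s]) (use ij j l in simp_all)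
    then show "oddpart \<tau> \<alpha> \<beta> ! i \<le> oddpart \<tau> \<alpha> \<beta> ! j"
      using ij j by (simp add: oddpart_def)
  qed
  show "sorted (evenpart \<tau> \<alpha> \<beta>)"
  proof (subst sorted_iff_nth_mono, intro allI impI)
    fix i j assume ij: "i \<le> j" "j < length (evenpart \<tau> \<alpha> \<beta>)"
    then have j: "j < \<tau>" by (simp add: oe_len)
    have "gam \<alpha> \<beta> ! (2*i+1) \<le> gam \<alpha> \<beta> ! (2*j+1)"
      by (rule sorted_nth_mono[OF s]) (use ij j l in simp_all)
    then show "evenpart \<tau> \<alpha> \<beta> ! i \<le> evenpart \<tau> \<alpha> \<beta> ! j"
      using ij j by (simp add: evenpart_def)
  qed
qed

lemma oe_sorted_monom:
  assumes "length \<alpha> = \<tau>" "length \<beta> = \<tau>"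
  shows "sorted_monom {#oddpart \<tau> \<alpha> \<beta>, evenpart \<tau> \<alpha> \<beta>#}"
  unfolding sorted_monom_def
  by (rule exI[of _ "[oddpart \<tau> \<alpha> \<beta>, evenpart \<tau> \<alpha> \<beta>]"])
     (simp add: ct_il oe_len oe_il[OF assms] gam_sorted)

lemma mset_two: "mset ls = {#u, v#} \<Longrightarrow> ls = [u,v] \<or> ls = [v,u]"
proof -
  assume h: "mset ls = {#u, v#}"
  have "length ls = 2" using arg_cong[OF h, of size] by simp
  then obtain a b where ab: "ls = [a,b]"
    by (auto simp: numeral_2_eq_2 length_Suc_conv)
  with h have "{#a, b#} = {#u, v#}" by simp
  then show ?thesis using ab by (auto simp: add_eq_conv_ex)
qed

lemma pair_sorted_il:
  assumes "length u = length v" "sorted_monom {#u, v#}"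
  shows "sorted (il u v) \<or> sorted (il v u)"
proof -
  obtain ls where ls: "mset ls = {#u, v#}" "sorted (concat (transpose ls))"
    using assms(2) unfolding sorted_monom_def by blast
  from mset_two[OF ls(1)] show ?thesis using ls(2) assms(1) by (auto simp: ct_il)
qed

definition C :: "nat list \<Rightarrow> nat \<Rightarrow> nat" where
  "C v h = length (filter (\<lambda>x. x \<le> h) v)"

lemma C_mset: "C v h = size (filter_mset (\<lambda>x. x \<le> h) (mset v))"
  by (metis C_def mset_filter size_mset)

lemma C_il: "length u = length v \<Longrightarrow> C (il u v) h = C u h + C v h"
  by (simp add: C_mset il_mset)

lemma C_le: "C v h \<le> length v"
  by (simp add: C_def)

lemma C_mono: "h \<le> h' \<Longrightarrow> C v h \<le> C v h'"
  unfolding C_def by (induction v) auto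

lemma C_sat: "\<forall>x\<in>set v. x \<le> d \<Longrightarrow> d \<le> h \<Longrightarrow> C v h = length v"
  unfolding C_def by (induction v) auto

lemma sorted_C:
  assumes s: "sorted g" and p: "p < length g"
  shows "g ! p \<le> h \<longleftrightarrow> p < C g h"
proof -
  have Ceq: "C g h = card {i. i < length g \<and> g ! i \<le> h}"
    by (simp add: C_def length_filter_conv_card)
  show ?thesis
  proof
    assume "g ! p \<le> h"
    then have "{..<Suc p} \<subseteq> {i. i < length g \<and> g ! i \<le> h}"
      using s p by (auto simp: sorted_iff_nth_mono) (meson le_trans less_Suc_eq_le)
    then have "card {..<Suc p} \<le> C g h" unfolding Ceq by (intro card_mono) auto
    then show "p < C g h" by simp
  next
    assume a: "p < C g h"
    show "g ! p \<le> h"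
    proof (rule ccontr)
      assume "\<not> g ! p \<le> h"
      then have "{i. i < length g \<and> g ! i \<le> h} \<subseteq> {..<p}"
        using s p by (auto simp: sorted_iff_nth_mono) (meson le_trans not_le_imp_less)
      then have "C g h \<le> card {..<p}" unfolding Ceq by (intro card_mono) auto
      then show False using a by simp
    qed
  qed
qed

lemma C_oe:
  assumes "length \<alpha> = \<tau>" "length \<beta> = \<tau>"
  shows "C (oddpart \<tau> \<alpha> \<beta>) h = (C \<alpha> h + C \<beta> h + 1) div 2"
        "C (evenpart \<tau> \<alpha> \<beta>) h = (C \<alpha> h + C \<beta> h) div 2"
proof -
  let ?g = "gam \<alpha> \<beta>"
  have l: "length ?g = 2*\<tau>" using assms by (simp add: gam_len)
  have n: "C ?g h = C \<alpha> h + C \<beta> h" using assms by (simp add: C_mset gam_mset)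
  have nle: "C ?g h \<le> 2*\<tau>" using C_le[of ?g h] l by simp
  have key: "\<And>p. p < 2*\<tau> \<Longrightarrow> ?g ! p \<le> h \<longleftrightarrow> p < C ?g h"
    using sorted_C[OF gam_sorted] l by simp
  have "C (oddpart \<tau> \<alpha> \<beta>) h = card {k. k < \<tau> \<and> oddpart \<tau> \<alpha> \<beta> ! k \<le> h}"
    by (simp add: C_def oe_len length_filter_conv_card)
  also have "{k. k < \<tau> \<and> oddpart \<tau> \<alpha> \<beta> ! k \<le> h} = {k. k < \<tau> \<and> ?g ! (2*k) \<le> h}"
    by (auto simp: oddpart_def)
  also have "{k. k < \<tau> \<and> ?g ! (2*k) \<le> h} = {k. k < \<tau> \<and> 2*k < C ?g h}"
    using key by auto
  also have "\<dots> = {..<(C ?g h + 1) div 2}" using nle by (intro set_eqI) (simp, presburger)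
  finally show "C (oddpart \<tau> \<alpha> \<beta>) h = (C \<alpha> h + C \<beta> h + 1) div 2" using n by simp
  have "C (evenpart \<tau> \<alpha> \<beta>) h = card {k. k < \<tau> \<and> evenpart \<tau> \<alpha> \<beta> ! k \<le> h}"
    by (simp add: C_def oe_len length_filter_conv_card)
  also have "{k. k < \<tau> \<and> evenpart \<tau> \<alpha> \<beta> ! k \<le> h} = {k. k < \<tau> \<and> ?g ! (2*k+1) \<le> h}"
    by (auto simp: evenpart_def)
  also have "{k. k < \<tau> \<and> ?g ! (2*k+1) \<le> h} = {k. k < \<tau> \<and> 2*k+1 < C ?g h}"
    using key by auto
  also have "\<dots> = {..<(C ?g h) div 2}" using nle by (intro set_eqI) (simp, presburger)
  finally show "C (evenpart \<tau> \<alpha> \<beta>) h = (C \<alpha> h + C \<beta> h) div 2" using n by simp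
qed

lemma count_C: "count (mset v) x = C v x - (if x = 0 then 0 else C v (x - 1))"
proof -
  have a: "C v x = count (mset v) x + length (filter (\<lambda>y. y < x) v)"
    unfolding count_mset C_def by (induction v) auto
  show ?thesis
  proof (cases "x = 0")
    case True
    then show ?thesis using a by simp
  next
    case False
    have "filter (\<lambda>y. y < x) v = filter (\<lambda>y. y \<le> x - 1) v"
      by (rule filter_cong) (use False in auto)
    then have "C v (x - 1) = length (filter (\<lambda>y. y < x) v)" unfolding C_def by simp
    then show ?thesis using a False by simp
  qed
qed

lemma C_inj:
  assumes "sorted u" "sorted v" "\<And>h. C u h = C v h"
  shows "u = v"
proof -
  have "mset u = mset v"
    by (rule multiset_eqI) (simp only: count_C assms(3))
  then have "sort v = u" by (rule properties_for_sort) (use assms in simp)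
  then show ?thesis using assms(2) by (simp add: sorted_sort_id)
qed


lemma A1':
  fixes a b :: nat
  assumes "a \<le> b"
  shows "((a+b+1) div 2)^2 + ((a+b) div 2)^2 \<le> a^2+b^2"
    and "((a+b+1) div 2)^2 + ((a+b) div 2)^2 = a^2+b^2 \<Longrightarrow> (a+b+1) div 2 = b \<and> (a+b) div 2 = a"
proof -
  obtain k where b: "b = a + k" using assms le_Suc_ex by blast
  define p where "p = (k+1) div 2"
  define q where "q = k div 2"
  have e1: "(a+b+1) div 2 = a + p" unfolding p_def b by simp
  have e2: "(a+b) div 2 = a + q" unfolding q_def b by simp
  have pq: "p + q = k" unfolding p_def q_def by simp
  have qp: "q \<le> p" unfolding p_def q_def by simp
  have L: "((a+b+1) div 2)^2 + ((a+b) div 2)^2 = 2*a^2 + 2*a*k + p^2 + q^2"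
    unfolding e1 e2 pq[symmetric] by (simp add: power2_eq_square algebra_simps)
  have R: "a^2+b^2 = 2*a^2 + 2*a*k + p^2 + q^2 + 2*p*q"
    unfolding b pq[symmetric] by (simp add: power2_eq_square algebra_simps)
  show "((a+b+1) div 2)^2 + ((a+b) div 2)^2 \<le> a^2+b^2" unfolding L R by simp
  assume "((a+b+1) div 2)^2 + ((a+b) div 2)^2 = a^2+b^2"
  then have "p * q = 0" unfolding L R by simp
  then have "q = 0" using qp by auto
  then show "(a+b+1) div 2 = b \<and> (a+b) div 2 = a" using e1 e2 pq b by simp
qed

lemma A1:
  fixes a b :: nat
  shows "((a+b+1) div 2)^2 + ((a+b) div 2)^2 \<le> a^2+b^2"
    and "((a+b+1) div 2)^2 + ((a+b) div 2)^2 = a^2+b^2 \<Longrightarrow> (a+b+1) div 2 = max a b \<and> (a+b) div 2 = min a b"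
proof -
  show "((a+b+1) div 2)^2 + ((a+b) div 2)^2 \<le> a^2+b^2"
  proof (cases "a \<le> b")
    case True then show ?thesis by (rule A1'(1))
  next
    case False then show ?thesis using A1'(1)[of b a] by (simp add: add.commute)
  qed
  assume h: "((a+b+1) div 2)^2 + ((a+b) div 2)^2 = a^2+b^2"
  show "(a+b+1) div 2 = max a b \<and> (a+b) div 2 = min a b"
  proof (cases "a \<le> b")
    case True then show ?thesis using A1'(2)[OF True h] by simp
  next
    case False
    have "b \<le> a" using False by simp
    moreover have "((b+a+1) div 2)^2 + ((b+a) div 2)^2 = b^2+a^2" using h by (simp add: add.commute)
    ultimately show ?thesis using A1'(2)[of b a] False by (simp add: add.commute)
  qed
qed

lemma A2:
  fixes SA SB SO SE :: nat
  assumes "SO + SE = SA + SB" "SA \<le> SO" "SB \<le> SO"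
  shows "SA^2 + SB^2 \<le> SO^2 + SE^2"
    and "SA^2 + SB^2 = SO^2 + SE^2 \<Longrightarrow> SO = SA \<or> SO = SB"
proof -
  obtain x where x: "SO = SA + x" using assms(2) le_Suc_ex by blast
  have sb: "SB = SE + x" using assms(1) x by simp
  obtain y where y: "SA = SE + y" using assms(3) x sb by (metis add_le_cancel_right le_Suc_ex)
  have eq: "SO^2 + SE^2 = SA^2 + SB^2 + 2*x*y"
    unfolding x sb y by (simp add: power2_eq_square algebra_simps)
  show "SA^2 + SB^2 \<le> SO^2 + SE^2" using eq by simp
  assume "SA^2 + SB^2 = SO^2 + SE^2"
  then have "x * y = 0" using eq by simp
  then show "SO = SA \<or> SO = SB" using x sb y by auto
qed

lemma sum_eq_pointwise:
  fixes f g :: "'a \<Rightarrow> nat"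
  assumes "finite A" "\<And>x. x \<in> A \<Longrightarrow> f x \<le> g x" "sum f A = sum g A" "x \<in> A"
  shows "f x = g x"
proof (rule ccontr)
  assume "f x \<noteq> g x"
  then have "f x < g x" using assms(2)[OF assms(4)] by simp
  then have "sum f A < sum g A"
    using assms(1,2,4) by (intro sum_strict_mono_ex1) auto
  then show False using assms(3) by simp
qed

definition Phi1 :: "nat \<Rightarrow> nat list \<Rightarrow> nat" where
  "Phi1 d v = (\<Sum>h\<le>d. (C v h)^2)"

definition Phi2 :: "nat \<Rightarrow> nat list \<Rightarrow> nat" where
  "Phi2 d v = (\<Sum>h\<le>d. C v h)^2"

lemma step_ineq:
  fixes \<alpha> \<beta> :: "nat list" and \<tau> d :: nat
  defines "ov \<equiv> oddpart \<tau> \<alpha> \<beta>" and "ev \<equiv> evenpart \<tau> \<alpha> \<beta>"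
  assumes la: "length \<alpha> = \<tau>" and lb: "length \<beta> = \<tau>"
    and sa: "sorted \<alpha>" and sb: "sorted \<beta>"
    and da: "\<forall>x\<in>set \<alpha>. x \<le> d" and db: "\<forall>x\<in>set \<beta>. x \<le> d"
    and ne: "{#\<alpha>, \<beta>#} \<noteq> {#ov, ev#}"
  shows "Phi1 d ov + Phi1 d ev < Phi1 d \<alpha> + Phi1 d \<beta> \<or>
         (Phi1 d ov + Phi1 d ev = Phi1 d \<alpha> + Phi1 d \<beta> \<and> Phi2 d \<alpha> + Phi2 d \<beta> < Phi2 d ov + Phi2 d ev)"
proof (rule ccontr)
  assume neg: "\<not> ?thesis"
  define a where "a h = C \<alpha> h" for h
  define b where "b h = C \<beta> h" for h
  have co: "C ov h = (a h + b h + 1) div 2" for h unfolding ov_def a_def b_def using C_oe[OF la lb] by simp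
  have ce: "C ev h = (a h + b h) div 2" for h unfolding ev_def a_def b_def using C_oe[OF la lb] by simp
  have so: "sorted ov" "sorted ev" unfolding ov_def ev_def using oe_sorted[OF la lb] by auto
  have P1o: "Phi1 d ov + Phi1 d ev = (\<Sum>h\<le>d. (C ov h)^2 + (C ev h)^2)"
    by (simp add: Phi1_def sum.distrib)
  have P1a: "Phi1 d \<alpha> + Phi1 d \<beta> = (\<Sum>h\<le>d. (a h)^2 + (b h)^2)"
    by (simp add: Phi1_def sum.distrib a_def b_def)
  have ptw: "(C ov h)^2 + (C ev h)^2 \<le> (a h)^2 + (b h)^2" for h
    unfolding co ce by (rule A1(1))
  have "Phi1 d ov + Phi1 d ev \<le> Phi1 d \<alpha> + Phi1 d \<beta>"
    unfolding P1o P1a by (rule sum_mono) (rule ptw)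
  then have eq1: "Phi1 d ov + Phi1 d ev = Phi1 d \<alpha> + Phi1 d \<beta>" using neg by simp
  have eqh: "(C ov h)^2 + (C ev h)^2 = (a h)^2 + (b h)^2" if "h \<le> d" for h
    using sum_eq_pointwise[of "{..d}" "\<lambda>h. (C ov h)^2 + (C ev h)^2" "\<lambda>h. (a h)^2 + (b h)^2" h]
      ptw eq1 that unfolding P1o P1a by simp
  have mm: "C ov h = max (a h) (b h) \<and> C ev h = min (a h) (b h)" if "h \<le> d" for h
    using A1(2)[of "a h" "b h"] eqh[OF that] unfolding co ce by simp
  define SO where "SO = (\<Sum>h\<le>d. C ov h)"
  define SE where "SE = (\<Sum>h\<le>d. C ev h)"
  define SA where "SA = (\<Sum>h\<le>d. a h)"
  define SB where "SB = (\<Sum>h\<le>d. b h)"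
  have s1: "SO + SE = SA + SB"
    unfolding SO_def SE_def SA_def SB_def sum.distrib[symmetric]
    by (rule sum.cong) (auto simp: mm)
  have s2: "SA \<le> SO" unfolding SO_def SA_def by (rule sum_mono) (simp add: mm)
  have s3: "SB \<le> SO" unfolding SO_def SB_def by (rule sum_mono) (simp add: mm)
  have "SA^2 + SB^2 \<le> SO^2 + SE^2" by (rule A2(1)[OF s1 s2 s3])
  moreover have "\<not> Phi2 d \<alpha> + Phi2 d \<beta> < Phi2 d ov + Phi2 d ev" using neg eq1 by simp
  ultimately have "SA^2 + SB^2 = SO^2 + SE^2"
    unfolding Phi2_def SO_def SE_def SA_def SB_def a_def b_def by simp
  then have cases: "SO = SA \<or> SO = SB" by (rule A2(2)[OF s1 s2 s3])
  have sat: "a h = \<tau> \<and> b h = \<tau>" if "\<not> h \<le> d" for h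
    unfolding a_def b_def using C_sat[OF da, of h] C_sat[OF db, of h] that la lb by simp
  from cases show False
  proof
    assume "SO = SA"
    then have "a h = C ov h" if "h \<le> d" for h
      using sum_eq_pointwise[of "{..d}" a "\<lambda>h. C ov h" h] mm that unfolding SO_def SA_def by simp
    then have A: "C ov h = C \<alpha> h \<and> C ev h = C \<beta> h" for h
      using mm sat co ce unfolding a_def b_def by (cases "h \<le> d") (fastforce+)
    have "ov = \<alpha>" by (rule C_inj[OF so(1) sa]) (use A in simp)
    moreover have "ev = \<beta>" by (rule C_inj[OF so(2) sb]) (use A in simp)
    ultimately show False using ne by simp
  next
    assume "SO = SB"
    then have "b h = C ov h" if "h \<le> d" for h
      using sum_eq_pointwise[of "{..d}" b "\<lambda>h. C ov h" h] mm that unfolding SO_def SB_def by simp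
    then have A: "C ov h = C \<beta> h \<and> C ev h = C \<alpha> h" for h
      using mm sat co ce unfolding a_def b_def by (cases "h \<le> d") (fastforce+)
    have "ov = \<beta>" by (rule C_inj[OF so(1) sb]) (use A in simp)
    moreover have "ev = \<alpha>" by (rule C_inj[OF so(2) sa]) (use A in simp)
    ultimately show False using ne by (simp add: add_mset_commute)
  qed
qed


definition PS :: "nat list multiset \<Rightarrow> bool" where
  "PS m \<longleftrightarrow> (\<forall>\<alpha> \<beta>. {#\<alpha>, \<beta>#} \<subseteq># m \<longrightarrow> sorted_monom {#\<alpha>, \<beta>#})"

definition Pm :: "nat list multiset \<Rightarrow> nat multiset" where
  "Pm m = \<Sum>\<^sub># (image_mset mset m)"

definition rel :: "nat \<Rightarrow> nat list \<Rightarrow> nat list \<Rightarrow> bool" where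
  "rel \<tau> u v \<longleftrightarrow> (\<forall>i<\<tau>. u!i \<le> v!i \<and> (Suc i < \<tau> \<longrightarrow> v!i \<le> u!(Suc i)))"

lemma rel_refl: "sorted v \<Longrightarrow> length v = \<tau> \<Longrightarrow> rel \<tau> v v"
  unfolding rel_def by (auto intro: sorted_nth_mono)

lemma il_rel:
  assumes "length u = \<tau>" "length v = \<tau>" "sorted (il u v)"
  shows "rel \<tau> u v"
  unfolding rel_def
proof (intro allI impI conjI)
  fix i assume i: "i < \<tau>"
  have l: "length (il u v) = 2*\<tau>" using assms by (simp add: il_len)
  have "il u v ! (2*i) \<le> il u v ! (2*i+1)"
    by (rule sorted_nth_mono[OF assms(3)]) (use i l in simp_all)
  then show "u ! i \<le> v ! i" using il_nth0[of u v i] il_nth1[of u v i] assms i by simp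
  assume si: "Suc i < \<tau>"
  have "il u v ! (2*i+1) \<le> il u v ! (2*(Suc i))"
    by (rule sorted_nth_mono[OF assms(3)]) (use si l in simp_all)
  then show "v ! i \<le> u ! Suc i" using il_nth0[of u v "Suc i"] il_nth1[of u v i] assms i si by simp
qed

lemma pair_rel:
  assumes "length u = \<tau>" "length v = \<tau>" "sorted_monom {#u, v#}"
  shows "rel \<tau> u v \<or> rel \<tau> v u"
  using pair_sorted_il[of u v] assms il_rel[of u \<tau> v] il_rel[of v \<tau> u] by auto

lemma sum_le_eq:
  fixes u v :: "nat list"
  assumes "length u = n" "length v = n" "\<forall>i<n. u!i \<le> v!i" "sum_list v \<le> sum_list u"
  shows "u = v"
proof -
  have su: "sum_list u = (\<Sum>i = 0..<n. u!i)" using assms(1) by (simp add: sum_list_sum_nth)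
  have sv: "sum_list v = (\<Sum>i = 0..<n. v!i)" using assms(2) by (simp add: sum_list_sum_nth)
  have "(\<Sum>i = 0..<n. u!i) \<le> (\<Sum>i = 0..<n. v!i)" by (rule sum_mono) (use assms(3) in auto)
  then have eq: "(\<Sum>i = 0..<n. u!i) = (\<Sum>i = 0..<n. v!i)" using assms(4) su sv by simp
  show ?thesis
  proof (rule nth_equalityI)
    show "length u = length v" using assms by simp
    fix i assume "i < length u"
    then show "u ! i = v ! i"
      using sum_eq_pointwise[of "{0..<n}" "\<lambda>i. u!i" "\<lambda>i. v!i" i] assms(1,3) eq by simp
  qed
qed

lemma sum_le_pt:
  fixes u v :: "nat list"
  assumes "length u = n" "length v = n" "\<forall>i<n. u!i \<le> v!i"
  shows "sum_list u \<le> sum_list v"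
proof -
  have su: "sum_list u = (\<Sum>i = 0..<n. u!i)" using assms(1) by (simp add: sum_list_sum_nth)
  have sv: "sum_list v = (\<Sum>i = 0..<n. v!i)" using assms(2) by (simp add: sum_list_sum_nth)
  show ?thesis unfolding su sv by (rule sum_mono) (use assms(3) in auto)
qed

lemma sub2: "a \<in># M \<Longrightarrow> b \<in># M \<Longrightarrow> a \<noteq> b \<Longrightarrow> {#a, b#} \<subseteq># M"
  by (simp add: insert_subset_eq_iff in_diff_count)

lemma chain_rel:
  assumes good: "\<forall>x\<in>set ls. length x = \<tau> \<and> sorted x"
    and srt: "sorted (map sum_list ls)" and ps: "PS (mset ls)"
    and jj: "j \<le> j'" "j' < length ls"
  shows "rel \<tau> (ls!j) (ls!j')"
proof (cases "ls!j = ls!j'")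
  case True
  then show ?thesis using good jj by (metis le_less_trans nth_mem rel_refl)
next
  case False
  have j: "j < length ls" using jj by simp
  have gj: "length (ls!j) = \<tau>" "sorted (ls!j)" using good j nth_mem by blast+
  have gj': "length (ls!j') = \<tau>" "sorted (ls!j')" using good jj(2) nth_mem by blast+
  have "{#ls!j, ls!j'#} \<subseteq># mset ls" by (rule sub2) (use j jj False in auto)
  then have "sorted_monom {#ls!j, ls!j'#}" using ps unfolding PS_def by blast
  then have r: "rel \<tau> (ls!j) (ls!j') \<or> rel \<tau> (ls!j') (ls!j)" by (rule pair_rel[OF gj(1) gj'(1)])
  have ss: "sum_list (ls!j) \<le> sum_list (ls!j')"
    using sorted_nth_mono[OF srt jj(1)] jj by simp
  show ?thesis
  proof (rule ccontr)
    assume "\<not> rel \<tau> (ls!j) (ls!j')"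
    then have "rel \<tau> (ls!j') (ls!j)" using r by simp
    then have "\<forall>i<\<tau>. ls!j'!i \<le> ls!j!i" unfolding rel_def by simp
    then have "ls!j' = ls!j" using sum_le_eq[OF gj'(1) gj(1)] ss by simp
    then show False using False by simp
  qed
qed

lemma len_concat_upt: "(\<forall>i<n. length (B i) = k) \<Longrightarrow> length (concat (map B [0..<n])) = n * k"
  by (induction n) auto

lemma concat_upt_nth:
  assumes "\<forall>i<n. length (B i) = k" "i < n" "j < k"
  shows "concat (map B [0..<n]) ! (i*k+j) = B i ! j"
  using assms
proof (induction n)
  case 0 then show ?case by simp
next
  case (Suc n)
  have L: "length (concat (map B [0..<n])) = n * k" using Suc.prems(1) by (intro len_concat_upt) auto
  show ?case
  proof (cases "i < n")
    case True
    have "i*k + j < n*k"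
    proof -
      have "i*k + j < i*k + k" using Suc.prems(3) by simp
      also have "\<dots> = (Suc i)*k" by simp
      also have "\<dots> \<le> n*k" using True by (intro mult_right_mono) auto
      finally show ?thesis .
    qed
    then show ?thesis using Suc True L by (simp add: nth_append)
  next
    case False
    then have "i = n" using Suc.prems(2) by simp
    then show ?thesis using L by (simp add: nth_append)
  qed
qed

definition wl :: "nat \<Rightarrow> nat list list \<Rightarrow> nat list" where
  "wl \<tau> ls = concat (map (\<lambda>i. map (\<lambda>j. ls!j!i) [0..<length ls]) [0..<\<tau>])"

lemma wl_len: "length (wl \<tau> ls) = \<tau> * length ls"
  unfolding wl_def by (subst len_concat_upt) auto

lemma wl_nth: "i < \<tau> \<Longrightarrow> j < length ls \<Longrightarrow> wl \<tau> ls ! (i * length ls + j) = ls!j!i"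
  unfolding wl_def by (subst concat_upt_nth) auto

lemma mset_map_upt: "mset (map f [0..<n]) = (\<Sum>i<n. {#f i#})"
  by (induction n) auto

lemma mset_concat_upt: "mset (concat (map B [0..<n])) = (\<Sum>i<n. mset (B i))"
  by (induction n) auto

lemma mset_nth_sum: "length v = \<tau> \<Longrightarrow> mset v = (\<Sum>i<\<tau>. {#v!i#})"
  by (metis map_nth mset_map_upt)

lemma wl_mset:
  assumes "\<forall>x\<in>set ls. length x = \<tau>"
  shows "mset (wl \<tau> ls) = Pm (mset ls)"
proof -
  have "mset (wl \<tau> ls) = (\<Sum>i<\<tau>. \<Sum>j<length ls. {#ls!j!i#})"
    unfolding wl_def mset_concat_upt mset_map_upt by simp
  also have "\<dots> = (\<Sum>j<length ls. \<Sum>i<\<tau>. {#ls!j!i#})" by (rule sum.swap)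
  also have "\<dots> = (\<Sum>j<length ls. mset (ls!j))"
    by (rule sum.cong) (use assms in \<open>auto simp: mset_nth_sum\<close>)
  also have "\<dots> = sum_list (map mset ls)"
    by (simp add: sum_list_sum_nth atLeast0LessThan)
  also have "\<dots> = Pm (mset ls)" unfolding Pm_def by (metis mset_map sum_mset_sum_list)
  finally show ?thesis .
qed

lemma wl_sorted:
  assumes good: "\<forall>x\<in>set ls. length x = \<tau> \<and> sorted x"
    and ch: "\<And>j j'. j \<le> j' \<Longrightarrow> j' < length ls \<Longrightarrow> rel \<tau> (ls!j) (ls!j')"
  shows "sorted (wl \<tau> ls)"
proof (subst sorted_iff_nth_mono, intro allI impI)
  let ?k = "length ls"
  fix p q assume pq: "p \<le> q" "q < length (wl \<tau> ls)"
  then have q: "q < \<tau> * ?k" by (simp add: wl_len)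
  then have kpos: "?k > 0" by (cases ?k) auto
  define i where "i = p div ?k"
  define j where "j = p mod ?k"
  define i' where "i' = q div ?k"
  define j' where "j' = q mod ?k"
  have pe: "p = i * ?k + j" unfolding i_def j_def by simp
  have qe: "q = i' * ?k + j'" unfolding i'_def j'_def by simp
  have jk: "j < ?k" "j' < ?k" unfolding j_def j'_def using kpos by simp_all
  have i'\<tau>: "i' < \<tau>" unfolding i'_def using q kpos
    by (simp add: div_less_iff_less_mult mult.commute)
  have ii': "i \<le> i'" unfolding i_def i'_def using pq(1) by (rule div_le_mono)
  have i\<tau>: "i < \<tau>" using ii' i'\<tau> by simp
  have wp: "wl \<tau> ls ! p = ls!j!i" using wl_nth[OF i\<tau> jk(1)] pe by simp
  have wq: "wl \<tau> ls ! q = ls!j'!i'" using wl_nth[OF i'\<tau> jk(2)] qe by simp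
  have r: "\<And>a b t. a \<le> b \<Longrightarrow> b < ?k \<Longrightarrow> t < \<tau> \<Longrightarrow> ls!a!t \<le> ls!b!t"
    using ch unfolding rel_def by blast
  show "wl \<tau> ls ! p \<le> wl \<tau> ls ! q"
  proof (cases "i = i'")
    case True
    then have "j \<le> j'" using pq(1) pe qe by simp
    then show ?thesis unfolding wp wq using r jk i\<tau> True by simp
  next
    case False
    then have lt: "i < i'" using ii' by simp
    have "ls!j!i \<le> ls!(?k-1)!i" using r[of j "?k - 1" i] jk kpos i\<tau> by simp
    also have "\<dots> \<le> ls!0!(Suc i)"
      using ch[of 0 "?k - 1"] kpos lt i'\<tau> i\<tau> unfolding rel_def by simp
    also have "\<dots> \<le> ls!j'!(Suc i)" using r[of 0 j' "Suc i"] jk lt i'\<tau> by simp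
    also have "\<dots> \<le> ls!j'!i'"
    proof -
      have "length (ls!j') = \<tau>" "sorted (ls!j')" using good jk(2) nth_mem by blast+
      then show ?thesis using lt i'\<tau> by (intro sorted_nth_mono) auto
    qed
    finally show ?thesis unfolding wp wq .
  qed
qed

lemma chain_exists:
  assumes "\<forall>x\<in>#m. length x = \<tau> \<and> sorted x" "PS m"
  shows "\<exists>ls. mset ls = m \<and> (\<forall>x\<in>set ls. length x = \<tau> \<and> sorted x) \<and> sorted (wl \<tau> ls)
      \<and> mset (wl \<tau> ls) = Pm m"
proof -
  obtain xs where xs: "mset xs = m" using ex_mset by blast
  define ls where "ls = sort_key sum_list xs"
  have m: "mset ls = m" unfolding ls_def using xs by simp
  have g: "\<forall>x\<in>set ls. length x = \<tau> \<and> sorted x" using assms(1) m by (metis set_mset_mset)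
  have s: "sorted (map sum_list ls)" unfolding ls_def by simp
  have ps: "PS (mset ls)" using m assms(2) by simp
  have "sorted (wl \<tau> ls)" by (rule wl_sorted[OF g]) (rule chain_rel[OF g s ps])
  moreover have "mset (wl \<tau> ls) = Pm m" using wl_mset[of ls \<tau>] g m by simp
  ultimately show ?thesis using m g by blast
qed

lemma PS_unique:
  assumes t: "\<tau> \<ge> 1"
    and g1: "\<forall>x\<in>#m1. length x = \<tau> \<and> sorted x" and g2: "\<forall>x\<in>#m2. length x = \<tau> \<and> sorted x"
    and p1: "PS m1" and p2: "PS m2" and eq: "Pm m1 = Pm m2"
  shows "m1 = m2"
proof -
  obtain ls1 where l1: "mset ls1 = m1" "\<forall>x\<in>set ls1. length x = \<tau> \<and> sorted x" "sorted (wl \<tau> ls1)"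
      "mset (wl \<tau> ls1) = Pm m1" using chain_exists[OF g1 p1] by blast
  obtain ls2 where l2: "mset ls2 = m2" "\<forall>x\<in>set ls2. length x = \<tau> \<and> sorted x" "sorted (wl \<tau> ls2)"
      "mset (wl \<tau> ls2) = Pm m2" using chain_exists[OF g2 p2] by blast
  have "sort (wl \<tau> ls2) = wl \<tau> ls1" by (rule properties_for_sort) (use l1 l2 eq in simp_all)
  moreover have "sort (wl \<tau> ls2) = wl \<tau> ls2" using l2(3) by (simp add: sorted_sort_id)
  ultimately have w: "wl \<tau> ls1 = wl \<tau> ls2" by simp
  have "\<tau> * length ls1 = \<tau> * length ls2" using arg_cong[OF w, of length] by (simp add: wl_len)
  then have k: "length ls1 = length ls2" using t by simp
  have "ls1 = ls2"
  proof (rule nth_equalityI[OF k])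
    fix j assume j: "j < length ls1"
    have a: "length (ls1!j) = \<tau>" using l1(2) j nth_mem by blast
    have b: "length (ls2!j) = \<tau>" using l2(2) j k nth_mem by metis
    show "ls1 ! j = ls2 ! j"
    proof (rule nth_equalityI)
      show "length (ls1 ! j) = length (ls2 ! j)" using a b by simp
      fix i assume "i < length (ls1 ! j)"
      then have i: "i < \<tau>" using a by simp
      show "ls1 ! j ! i = ls2 ! j ! i"
        using wl_nth[OF i j] wl_nth[of i \<tau> j ls2] i j k w by simp
    qed
  qed
  then show ?thesis using l1(1) l2(1) by simp
qed


lemma dd1: "(m::nat) div 2 \<le> (n + m + 1) div 2 - (n+1) div 2 \<and> (n + m + 1) div 2 - (n+1) div 2 \<le> (m+1) div 2"
  by (cases "even n"; cases "even m") (auto elim!: evenE oddE)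
lemma dd2: "(m::nat) div 2 \<le> (n + m) div 2 - n div 2 \<and> (n + m) div 2 - n div 2 \<le> (m+1) div 2"
  by (cases "even n"; cases "even m") (auto elim!: evenE oddE)
lemma hb: "c \<le> int x \<Longrightarrow> c \<le> int y \<Longrightarrow> c \<le> int ((x+y) div 2)"
proof -
  assume a: "c \<le> int x" "c \<le> int y"
  define q where "q = (x+y) div 2"
  have "x + y \<le> 2*q+1" unfolding q_def by simp
  then have "int (x+y) \<le> int (2*q+1)" by (simp only: of_nat_le_iff)
  then have "int x + int y \<le> 2 * int q + 1" by simp
  then show ?thesis using a unfolding q_def[symmetric] by presburger
qed
lemma hb2: "int x \<le> b \<Longrightarrow> int y \<le> b \<Longrightarrow> int ((x+y+1) div 2) \<le> b"
proof -
  assume a: "int x \<le> b" "int y \<le> b"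
  define q where "q = (x+y+1) div 2"
  have "2*q \<le> x + y + 1" unfolding q_def by simp
  then have "int (2*q) \<le> int (x + y + 1)" by (simp only: of_nat_le_iff)
  then have "2 * int q \<le> int x + int y + 1" by simp
  then show ?thesis using a unfolding q_def[symmetric] by presburger
qed
lemma core: "c \<le> int m1 \<Longrightarrow> int m2 \<le> b \<Longrightarrow> m1 \<le> D \<Longrightarrow> D \<le> m2 \<Longrightarrow> c \<le> int D \<and> int D \<le> (b::int)"
  by linarith
lemma arith1:
  fixes as ar bs br :: nat and c b :: int
  assumes "as \<le> ar" "bs \<le> br" "c \<le> int (ar - as)" "int (ar - as) \<le> b" "c \<le> int (br - bs)" "int (br - bs) \<le> b"
  shows "c \<le> int ((ar+br+1) div 2 - (as+bs+1) div 2) \<and> int ((ar+br+1) div 2 - (as+bs+1) div 2) \<le> b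
       \<and> c \<le> int ((ar+br) div 2 - (as+bs) div 2) \<and> int ((ar+br) div 2 - (as+bs) div 2) \<le> b"
proof -
  obtain x where x: "ar = as + x" using assms(1) le_Suc_ex by blast
  obtain y where y: "br = bs + y" using assms(2) le_Suc_ex by blast
  have e1: "ar+br+1 = (as+bs) + (x+y) + 1" using x y by simp
  have e2: "ar+br = (as+bs) + (x+y)" using x y by simp
  have h1: "c \<le> int ((x+y) div 2)" using hb assms x y by simp
  have h2: "int ((x+y+1) div 2) \<le> b" using hb2 assms x y by simp
  note d1 = dd1[of "x+y" "as+bs"] and d2 = dd2[of "x+y" "as+bs"]
  have r1: "c \<le> int ((as+bs + (x+y) + 1) div 2 - (as+bs+1) div 2) \<and> int ((as+bs + (x+y) + 1) div 2 - (as+bs+1) div 2) \<le> b"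
    by (rule core[OF h1 h2 conjunct1[OF d1] conjunct2[OF d1]])
  have r2: "c \<le> int ((as+bs + (x+y)) div 2 - (as+bs) div 2) \<and> int ((as+bs + (x+y)) div 2 - (as+bs) div 2) \<le> b"
    by (rule core[OF h1 h2 conjunct1[OF d2] conjunct2[OF d2]])
  show ?thesis unfolding e1 e2 using r1 r2 by blast
qed

lemma sum_count_C: "(\<Sum>j\<le>h. count (mset v) j) = C v h"
proof (induction v)
  case Nil then show ?case by (simp add: C_def)
next
  case (Cons x v)
  have "(\<Sum>j\<le>h. count (mset (x#v)) j) = (\<Sum>j\<le>h. count (mset v) j + (if x = j then 1 else 0))"
    by (rule sum.cong) auto
  also have "\<dots> = C v h + (if x \<le> h then 1 else 0)"
    by (simp add: sum.distrib Cons.IH)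
  finally show ?case by (simp add: C_def)
qed

lemma interval_C:
  assumes "1 \<le> s" "s \<le> r"
  shows "(\<Sum>j=s..r. count (mset v) j) = C v r - C v (s - 1)"
proof -
  have u: "{..r} = {..s-1} \<union> {s..r}" using assms by auto
  have "(\<Sum>j\<le>r. count (mset v) j) = (\<Sum>j\<le>s-1. count (mset v) j) + (\<Sum>j=s..r. count (mset v) j)"
    unfolding u using assms by (subst sum.union_disjoint) auto
  then show ?thesis by (simp add: sum_count_C)
qed

lemma Vars_good: "v \<in> Vars d \<tau> M b c r s \<Longrightarrow> length v = \<tau> \<and> sorted v \<and> set v \<subseteq> {1..d}"
  by (simp add: Vars_def)

lemma Vars_finite: "finite (Vars d \<tau> M b c r s)"
proof (rule finite_subset)
  show "Vars d \<tau> M b c r s \<subseteq> {xs. set xs \<subseteq> {1..d} \<and> length xs = \<tau>}" by (auto simp: Vars_def)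
  show "finite {xs. set xs \<subseteq> {1..d} \<and> length xs = \<tau>}" by (rule finite_lists_length_eq) simp
qed

lemma oe_set:
  assumes "length \<alpha> = \<tau>" "length \<beta> = \<tau>"
  shows "set (oddpart \<tau> \<alpha> \<beta>) \<subseteq> set \<alpha> \<union> set \<beta>" "set (evenpart \<tau> \<alpha> \<beta>) \<subseteq> set \<alpha> \<union> set \<beta>"
proof -
  have "set_mset (mset (oddpart \<tau> \<alpha> \<beta>) + mset (evenpart \<tau> \<alpha> \<beta>)) = set \<alpha> \<union> set \<beta>"
    using oe_mset[OF assms] by simp
  then show "set (oddpart \<tau> \<alpha> \<beta>) \<subseteq> set \<alpha> \<union> set \<beta>" "set (evenpart \<tau> \<alpha> \<beta>) \<subseteq> set \<alpha> \<union> set \<beta>"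
    by auto
qed

lemma C_bot: "set v \<subseteq> {1..d} \<Longrightarrow> C v 0 = 0"
  unfolding C_def by (induction v) auto

lemma inConfig_list:
  assumes good: "length v = \<tau>" "set v \<subseteq> {1..d}"
    and iv: "\<forall>i\<in>{1..M}. c i \<le> int (C v (r i) - C v (s i - 1)) \<and> int (C v (r i) - C v (s i - 1)) \<le> b i"
    and sr: "\<forall>i\<in>{1..M}. 1 \<le> s i \<and> s i \<le> r i \<and> r i \<le> d"
  shows "inConfig d \<tau> M b c r s (expvec v)"
  unfolding inConfig_def expvec_def
proof (intro conjI ballI allI impI)
  fix j assume "j \<notin> {1..d}"
  then show "count (mset v) j = 0" using good by auto
next
  show "(\<Sum>j = 1..d. count (mset v) j) = \<tau>"
    using sum_count_set[of v "{1..d}"] good by (simp add: count_mset)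
next
  fix i assume i: "i \<in> {1..M}"
  have e: "(\<Sum>j = s i..r i. count (mset v) j) = C v (r i) - C v (s i - 1)"
    using sr i by (intro interval_C) auto
  show "c i \<le> int (\<Sum>j = s i..r i. count (mset v) j)" using iv i e by simp
  show "int (\<Sum>j = s i..r i. count (mset v) j) \<le> b i" using iv i e by simp
qed

lemma inConfig_C:
  assumes "inConfig d \<tau> M b c r s (expvec v)"
    and sr: "\<forall>i\<in>{1..M}. 1 \<le> s i \<and> s i \<le> r i \<and> r i \<le> d"
  shows "\<forall>i\<in>{1..M}. c i \<le> int (C v (r i) - C v (s i - 1)) \<and> int (C v (r i) - C v (s i - 1)) \<le> b i"
proof
  fix i assume i: "i \<in> {1..M}"
  have e: "(\<Sum>j = s i..r i. count (mset v) j) = C v (r i) - C v (s i - 1)"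
    using sr i by (intro interval_C) auto
  have h: "c i \<le> int (\<Sum>j = s i..r i. count (mset v) j) \<and> int (\<Sum>j = s i..r i. count (mset v) j) \<le> b i"
    using assms(1) i unfolding inConfig_def expvec_def by blast
  show "c i \<le> int (C v (r i) - C v (s i - 1)) \<and> int (C v (r i) - C v (s i - 1)) \<le> b i"
    using h by (simp only: e)
qed

lemma oe_Vars:
  assumes a: "\<alpha> \<in> Vars d \<tau> M b c r s" and b': "\<beta> \<in> Vars d \<tau> M b c r s"
    and sr: "\<forall>i\<in>{1..M}. 1 \<le> s i \<and> s i \<le> r i \<and> r i \<le> d"
  shows "oddpart \<tau> \<alpha> \<beta> \<in> Vars d \<tau> M b c r s \<and> evenpart \<tau> \<alpha> \<beta> \<in> Vars d \<tau> M b c r s"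
proof -
  have ga: "length \<alpha> = \<tau>" "sorted \<alpha>" "set \<alpha> \<subseteq> {1..d}" using Vars_good[OF a] by auto
  have gb: "length \<beta> = \<tau>" "sorted \<beta>" "set \<beta> \<subseteq> {1..d}" using Vars_good[OF b'] by auto
  have ca: "\<forall>i\<in>{1..M}. c i \<le> int (C \<alpha> (r i) - C \<alpha> (s i - 1)) \<and> int (C \<alpha> (r i) - C \<alpha> (s i - 1)) \<le> b i"
    using a sr by (intro inConfig_C) (auto simp: Vars_def)
  have cb: "\<forall>i\<in>{1..M}. c i \<le> int (C \<beta> (r i) - C \<beta> (s i - 1)) \<and> int (C \<beta> (r i) - C \<beta> (s i - 1)) \<le> b i"
    using b' sr by (intro inConfig_C) (auto simp: Vars_def)
  have ar: "\<forall>i\<in>{1..M}.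
     c i \<le> int (C (oddpart \<tau> \<alpha> \<beta>) (r i) - C (oddpart \<tau> \<alpha> \<beta>) (s i - 1)) \<and>
     int (C (oddpart \<tau> \<alpha> \<beta>) (r i) - C (oddpart \<tau> \<alpha> \<beta>) (s i - 1)) \<le> b i \<and>
     c i \<le> int (C (evenpart \<tau> \<alpha> \<beta>) (r i) - C (evenpart \<tau> \<alpha> \<beta>) (s i - 1)) \<and>
     int (C (evenpart \<tau> \<alpha> \<beta>) (r i) - C (evenpart \<tau> \<alpha> \<beta>) (s i - 1)) \<le> b i"
  proof
    fix i assume i: "i \<in> {1..M}"
    have sri: "s i \<le> r i" using sr i by blast
    have m1: "C \<alpha> (s i - 1) \<le> C \<alpha> (r i)" by (rule C_mono) (use sri in simp)
    have m2: "C \<beta> (s i - 1) \<le> C \<beta> (r i)" by (rule C_mono) (use sri in simp)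
    have ci: "c i \<le> int (C \<alpha> (r i) - C \<alpha> (s i - 1)) \<and> int (C \<alpha> (r i) - C \<alpha> (s i - 1)) \<le> b i"
      using ca i by (rule bspec)
    have cj: "c i \<le> int (C \<beta> (r i) - C \<beta> (s i - 1)) \<and> int (C \<beta> (r i) - C \<beta> (s i - 1)) \<le> b i"
      using cb i by (rule bspec)
    note A = arith1[OF m1 m2 conjunct1[OF ci] conjunct2[OF ci] conjunct1[OF cj] conjunct2[OF cj]]
    show "c i \<le> int (C (oddpart \<tau> \<alpha> \<beta>) (r i) - C (oddpart \<tau> \<alpha> \<beta>) (s i - 1)) \<and>
     int (C (oddpart \<tau> \<alpha> \<beta>) (r i) - C (oddpart \<tau> \<alpha> \<beta>) (s i - 1)) \<le> b i \<and>
     c i \<le> int (C (evenpart \<tau> \<alpha> \<beta>) (r i) - C (evenpart \<tau> \<alpha> \<beta>) (s i - 1)) \<and>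
     int (C (evenpart \<tau> \<alpha> \<beta>) (r i) - C (evenpart \<tau> \<alpha> \<beta>) (s i - 1)) \<le> b i"
      unfolding C_oe[OF ga(1) gb(1)] by (rule A)
  qed
  have ao: "\<forall>i\<in>{1..M}.
     c i \<le> int (C (oddpart \<tau> \<alpha> \<beta>) (r i) - C (oddpart \<tau> \<alpha> \<beta>) (s i - 1)) \<and>
     int (C (oddpart \<tau> \<alpha> \<beta>) (r i) - C (oddpart \<tau> \<alpha> \<beta>) (s i - 1)) \<le> b i"
    using ar by (simp only: conj_assoc[symmetric]) (meson conjunct1)
  have ae: "\<forall>i\<in>{1..M}.
     c i \<le> int (C (evenpart \<tau> \<alpha> \<beta>) (r i) - C (evenpart \<tau> \<alpha> \<beta>) (s i - 1)) \<and>
     int (C (evenpart \<tau> \<alpha> \<beta>) (r i) - C (evenpart \<tau> \<alpha> \<beta>) (s i - 1)) \<le> b i"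
    using ar by (meson conjunct2)
  have so: "sorted (oddpart \<tau> \<alpha> \<beta>)" "sorted (evenpart \<tau> \<alpha> \<beta>)" using oe_sorted[OF ga(1) gb(1)] by auto
  have st: "set (oddpart \<tau> \<alpha> \<beta>) \<subseteq> {1..d}" "set (evenpart \<tau> \<alpha> \<beta>) \<subseteq> {1..d}"
    using oe_set[OF ga(1) gb(1)] ga(3) gb(3) by auto
  have "inConfig d \<tau> M b c r s (expvec (oddpart \<tau> \<alpha> \<beta>))"
    by (rule inConfig_list[OF oe_len(1) st(1) ao sr])
  moreover have "inConfig d \<tau> M b c r s (expvec (evenpart \<tau> \<alpha> \<beta>))"
    by (rule inConfig_list[OF oe_len(2) st(2) ae sr])
  ultimately show ?thesis using so st by (simp add: Vars_def oe_len)
qed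


definition K1 :: "nat \<Rightarrow> nat list multiset \<Rightarrow> nat" where
  "K1 d m = \<Sum>\<^sub># (image_mset (Phi1 d) m)"
definition K2 :: "nat \<Rightarrow> nat list multiset \<Rightarrow> nat" where
  "K2 d m = \<Sum>\<^sub># (image_mset (Phi2 d) m)"

definition step :: "nat list set \<Rightarrow> nat \<Rightarrow> nat list multiset \<Rightarrow> nat list multiset \<Rightarrow> bool" where
  "step V \<tau> m m' \<longleftrightarrow> (\<exists>A \<alpha> \<beta>. nonsorted_quad V \<alpha> \<beta> \<and> m = A + {#\<alpha>, \<beta>#}
      \<and> m' = A + {#oddpart \<tau> \<alpha> \<beta>, evenpart \<tau> \<alpha> \<beta>#})"

definition Wl :: "nat \<Rightarrow> nat list multiset \<Rightarrow> nat list multiset \<Rightarrow> bool" where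
  "Wl d s m \<longleftrightarrow> K1 d s < K1 d m \<or> (K1 d s = K1 d m \<and> K2 d m < K2 d s)"

lemma Wl_trans: "Wl d a b \<Longrightarrow> Wl d b c \<Longrightarrow> Wl d a c"
  unfolding Wl_def by auto

locale tor =
  fixes V :: "nat list set" and \<tau> d :: nat
  assumes good: "\<And>v. v \<in> V \<Longrightarrow> length v = \<tau> \<and> sorted v \<and> set v \<subseteq> {1..d}"
    and clos: "\<And>\<alpha> \<beta>. \<alpha> \<in> V \<Longrightarrow> \<beta> \<in> V \<Longrightarrow> oddpart \<tau> \<alpha> \<beta> \<in> V \<and> evenpart \<tau> \<alpha> \<beta> \<in> V"
    and tau: "\<tau> \<ge> 1"
    and finV: "finite V"
begin

lemma ns_ne:
  assumes "nonsorted_quad V \<alpha> \<beta>"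
  shows "{#\<alpha>, \<beta>#} \<noteq> {#oddpart \<tau> \<alpha> \<beta>, evenpart \<tau> \<alpha> \<beta>#}"
proof
  assume h: "{#\<alpha>, \<beta>#} = {#oddpart \<tau> \<alpha> \<beta>, evenpart \<tau> \<alpha> \<beta>#}"
  have "length \<alpha> = \<tau>" "length \<beta> = \<tau>" using assms good unfolding nonsorted_quad_def by auto
  then have "sorted_monom {#\<alpha>, \<beta>#}" unfolding h by (rule oe_sorted_monom)
  then show False using assms unfolding nonsorted_quad_def by simp
qed

lemma Pm_add: "Pm (A + B) = Pm A + Pm B"
  by (simp add: Pm_def)

lemma Pm_pair: "Pm {#a, b#} = mset a + mset b"
  by (simp add: Pm_def)

lemma step_props:
  assumes "set_mset m \<subseteq> V" "step V \<tau> m m'"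
  shows "set_mset m' \<subseteq> V" "Pm m' = Pm m" "size m' = size m" "Wl d m' m"
proof -
  obtain A \<alpha> \<beta> where q: "nonsorted_quad V \<alpha> \<beta>" and m: "m = A + {#\<alpha>, \<beta>#}"
    and m': "m' = A + {#oddpart \<tau> \<alpha> \<beta>, evenpart \<tau> \<alpha> \<beta>#}"
    using assms(2) unfolding step_def by blast
  have ab: "\<alpha> \<in> V" "\<beta> \<in> V" using q unfolding nonsorted_quad_def by auto
  have ga: "length \<alpha> = \<tau>" "sorted \<alpha>" "set \<alpha> \<subseteq> {1..d}" using good[OF ab(1)] by auto
  have gb: "length \<beta> = \<tau>" "sorted \<beta>" "set \<beta> \<subseteq> {1..d}" using good[OF ab(2)] by auto
  show "set_mset m' \<subseteq> V" using assms(1) clos[OF ab] unfolding m m' by auto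
  show "Pm m' = Pm m" unfolding m m' Pm_add Pm_pair using oe_mset[OF ga(1) gb(1)] by simp
  show "size m' = size m" unfolding m m' by simp
  have da: "\<forall>x\<in>set \<alpha>. x \<le> d" "\<forall>x\<in>set \<beta>. x \<le> d" using ga(3) gb(3) by auto
  note si = step_ineq[OF ga(1) gb(1) ga(2) gb(2) da ns_ne[OF q]]
  show "Wl d m' m" using si unfolding Wl_def K1_def K2_def m m' by auto
qed

lemma notPS_step:
  assumes "set_mset m \<subseteq> V" "\<not> PS m"
  shows "\<exists>m'. step V \<tau> m m'"
proof -
  obtain \<alpha> \<beta> where sub: "{#\<alpha>, \<beta>#} \<subseteq># m" and ns: "\<not> sorted_monom {#\<alpha>, \<beta>#}"
    using assms(2) unfolding PS_def by blast
  have "\<alpha> \<in># m" "\<beta> \<in># m" using sub by (auto dest: mset_subset_eqD)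
  then have q: "nonsorted_quad V \<alpha> \<beta>" using assms(1) ns unfolding nonsorted_quad_def by auto
  have "m = (m - {#\<alpha>, \<beta>#}) + {#\<alpha>, \<beta>#}" by (rule sym[OF subset_mset.diff_add[OF sub]])
  then show ?thesis unfolding step_def using q by blast
qed

definition Bd :: nat where "Bd = ((d+1)*\<tau>)^2"

lemma Phi2_bound: "v \<in> V \<Longrightarrow> Phi2 d v \<le> Bd"
proof -
  assume v: "v \<in> V"
  have "(\<Sum>h\<le>d. C v h) \<le> (\<Sum>h\<le>d. \<tau>)"
    by (rule sum_mono) (use C_le good[OF v] in metis)
  then have "(\<Sum>h\<le>d. C v h) \<le> (d+1)*\<tau>" by simp
  then show ?thesis unfolding Phi2_def Bd_def by (simp add: power_mono)
qed

lemma K2_bound: "set_mset m \<subseteq> V \<Longrightarrow> K2 d m \<le> size m * Bd"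
proof (induction m)
  case empty then show ?case by (simp add: K2_def)
next
  case (add x m)
  then have "K2 d m \<le> size m * Bd" "Phi2 d x \<le> Bd" using Phi2_bound by auto
  then show ?case by (simp add: K2_def)
qed

lemma reduce:
  "set_mset m \<subseteq> V \<Longrightarrow> \<exists>s. set_mset s \<subseteq> V \<and> PS s \<and> Pm s = Pm m \<and> (step V \<tau>)\<^sup>*\<^sup>* m s
      \<and> (s = m \<or> Wl d s m)"
proof (induction m rule: wf_induct[OF wf_measures[of "[K1 d, \<lambda>m. size m * Bd - K2 d m]"]])
  case (1 m)
  show ?case
  proof (cases "PS m")
    case True
    then show ?thesis using "1.prems" by blast
  next
    case False
    obtain m' where st: "step V \<tau> m m'" using notPS_step[OF "1.prems" False] by blast
    note sp = step_props[OF "1.prems" st]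
    have "(m', m) \<in> measures [K1 d, \<lambda>m. size m * Bd - K2 d m]"
    proof -
      have b: "K2 d m' \<le> size m' * Bd" by (rule K2_bound[OF sp(1)])
      show ?thesis using sp(3,4) b unfolding Wl_def by auto
    qed
    then obtain s where s: "set_mset s \<subseteq> V" "PS s" "Pm s = Pm m'" "(step V \<tau>)\<^sup>*\<^sup>* m' s"
        "s = m' \<or> Wl d s m'"
      using "1.IH" sp(1) by blast
    have "(step V \<tau>)\<^sup>*\<^sup>* m s" using st s(4) by (rule converse_rtranclp_into_rtranclp)
    moreover have "Wl d s m" using s(5) sp(4) Wl_trans by blast
    ultimately show ?thesis using s sp(2) by auto
  qed
qed

lemma good_mset: "set_mset m \<subseteq> V \<Longrightarrow> \<forall>x\<in>#m. length x = \<tau> \<and> sorted x"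
  using good by blast

lemma PS_unique_V:
  "set_mset m1 \<subseteq> V \<Longrightarrow> set_mset m2 \<subseteq> V \<Longrightarrow> PS m1 \<Longrightarrow> PS m2 \<Longrightarrow> Pm m1 = Pm m2 \<Longrightarrow> m1 = m2"
  by (rule PS_unique[OF tau good_mset good_mset])

end


context tor
begin

definition key :: "nat list multiset \<Rightarrow> nat multiset \<times> nat \<times> int \<times> nat list multiset" where
  "key m = (Pm m, K1 d m, - int (K2 d m), m)"

definition leo :: "nat list multiset \<Rightarrow> nat list multiset \<Rightarrow> bool" where
  "leo m1 m2 \<longleftrightarrow> key m1 \<le> key m2"

lemma key_inj: "key m1 = key m2 \<Longrightarrow> m1 = m2"
  by (simp add: key_def)

lemma key_add: "key m1 \<le> key m2 \<Longrightarrow> key (m1 + m) \<le> key (m2 + m)"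
  by (auto simp: key_def K1_def K2_def Pm_add)

lemma Pm_nonempty:
  assumes "set_mset m \<subseteq> V" "m \<noteq> {#}"
  shows "Pm m \<noteq> {#}"
proof -
  obtain v where v: "v \<in># m" using assms(2) by blast
  then have "length v = \<tau>" using assms(1) good by blast
  then have mv: "mset v \<noteq> {#}" using tau by auto
  have "m = add_mset v (m - {#v#})" using v by simp
  then have "Pm m = mset v + Pm (m - {#v#})" unfolding Pm_def by (metis image_mset_add_mset sum_mset.insert)
  then show ?thesis using mv by simp
qed

lemma mono_order: "monomial_order V leo"
  unfolding monomial_order_def leo_def
proof (intro conjI allI impI)
  fix m1 m2 assume "is_monom V m1 \<and> is_monom V m2 \<and> key m1 \<le> key m2 \<and> key m2 \<le> key m1"
  then show "m1 = m2" using key_inj by (meson order_antisym)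
next
  fix m assume m: "is_monom V m"
  show "key {#} \<le> key m"
  proof (cases "m = {#}")
    case True then show ?thesis by simp
  next
    case False
    then have "Pm m \<noteq> {#}" using Pm_nonempty m unfolding is_monom_def by blast
    then have "{#} < Pm m" by simp
    then show ?thesis by (simp add: key_def Pm_def)
  qed
qed (auto intro: key_add order_trans)

lemma lm_eq:
  assumes "m \<in> Poly_Mapping.keys p" "\<forall>m'\<in>Poly_Mapping.keys p. leo m' m"
  shows "lm leo p = m"
  unfolding lm_def
proof (rule the_equality)
  show "m \<in> Poly_Mapping.keys p \<and> (\<forall>m'\<in>Poly_Mapping.keys p. leo m' m)" using assms by blast
  fix x assume "x \<in> Poly_Mapping.keys p \<and> (\<forall>m'\<in>Poly_Mapping.keys p. leo m' x)"
  then have "leo m x" "leo x m" using assms by auto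
  then show "x = m" unfolding leo_def using key_inj by (meson order_antisym)
qed

lemma lookup_binom:
  "Poly_Mapping.lookup (binom \<tau> \<alpha> \<beta> :: 'k::comm_ring_1 ypoly) x =
    (if x = {#\<alpha>, \<beta>#} then 1 else 0) - (if x = {#oddpart \<tau> \<alpha> \<beta>, evenpart \<tau> \<alpha> \<beta>#} then 1 else 0)"
  by (simp add: binom_def lookup_minus lookup_single when_def)

lemma keys_binom:
  assumes "nonsorted_quad V \<alpha> \<beta>"
  shows "Poly_Mapping.keys (binom \<tau> \<alpha> \<beta> :: 'k::field ypoly) = {{#\<alpha>, \<beta>#}, {#oddpart \<tau> \<alpha> \<beta>, evenpart \<tau> \<alpha> \<beta>#}}"
  using ns_ne[OF assms] by (auto simp: in_keys_iff lookup_binom split: if_splits)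

lemma key_less_W: "Pm a = Pm b \<Longrightarrow> Wl d a b \<Longrightarrow> key a < key b"
  unfolding key_def Wl_def by auto

lemma binom_less:
  assumes "nonsorted_quad V \<alpha> \<beta>"
  shows "key {#oddpart \<tau> \<alpha> \<beta>, evenpart \<tau> \<alpha> \<beta>#} < key {#\<alpha>, \<beta>#}"
proof -
  have st: "step V \<tau> {#\<alpha>, \<beta>#} {#oddpart \<tau> \<alpha> \<beta>, evenpart \<tau> \<alpha> \<beta>#}"
    unfolding step_def using assms by (intro exI[of _ "{#}"]) auto
  have s: "set_mset {#\<alpha>, \<beta>#} \<subseteq> V" using assms unfolding nonsorted_quad_def by auto
  show ?thesis using step_props[OF s st] by (intro key_less_W) auto
qed

lemma lm_binom:
  assumes "nonsorted_quad V \<alpha> \<beta>"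
  shows "lm leo (binom \<tau> \<alpha> \<beta> :: 'k::field ypoly) = {#\<alpha>, \<beta>#}"
  by (rule lm_eq) (use binom_less[OF assms] in \<open>auto simp: keys_binom[OF assms] leo_def\<close>)

end


context tor
begin

lemma ns_V: "nonsorted_quad V \<alpha> \<beta> \<Longrightarrow> \<alpha> \<in> V \<and> \<beta> \<in> V"
  unfolding nonsorted_quad_def by auto

lemma binom_in_I:
  assumes q: "nonsorted_quad V \<alpha> \<beta>"
  shows "(binom \<tau> \<alpha> \<beta> :: 'k::field ypoly) \<in> toricIdeal V"
proof -
  have ab: "\<alpha> \<in> V" "\<beta> \<in> V" using ns_V[OF q] by auto
  have oe: "oddpart \<tau> \<alpha> \<beta> \<in> V" "evenpart \<tau> \<alpha> \<beta> \<in> V" using clos[OF ab] by auto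
  have la: "length \<alpha> = \<tau>" "length \<beta> = \<tau>" using good ab by auto
  have inky: "inKY V (binom \<tau> \<alpha> \<beta> :: 'k ypoly)"
    unfolding inKY_def is_monom_def keys_binom[OF q] using ab oe by auto
  have P: "\<Sum>\<^sub># (image_mset mset {#oddpart \<tau> \<alpha> \<beta>, evenpart \<tau> \<alpha> \<beta>#}) = \<Sum>\<^sub># (image_mset mset {#\<alpha>, \<beta>#})"
    using oe_mset[OF la] by simp
  have "piY (binom \<tau> \<alpha> \<beta> :: 'k ypoly) =
     Poly_Mapping.single (\<Sum>\<^sub># (image_mset mset {#\<alpha>, \<beta>#})) 1
     + Poly_Mapping.single (\<Sum>\<^sub># (image_mset mset {#\<alpha>, \<beta>#})) (-1)"
    unfolding piY_def keys_binom[OF q] using ns_ne[OF q] P by (simp add: lookup_binom)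
  also have "\<dots> = 0" by (simp flip: single_add)
  finally show ?thesis using inky unfolding toricIdeal_def by simp
qed

lemma binom_sym: "length \<alpha> = length \<beta> \<Longrightarrow> binom \<tau> \<beta> \<alpha> = binom \<tau> \<alpha> \<beta>"
  by (simp add: binom_def oddpart_sym[of \<alpha> \<beta>] evenpart_sym[of \<alpha> \<beta>] add_mset_commute)

lemma binom_eq:
  assumes "nonsorted_quad V \<alpha> \<beta>" "{#\<alpha>', \<beta>'#} = {#\<alpha>, \<beta>#}"
  shows "binom \<tau> \<alpha>' \<beta>' = binom \<tau> \<alpha> \<beta>"
proof -
  have la: "length \<alpha> = length \<beta>" using good ns_V[OF assms(1)] by auto
  from assms(2) have "(\<alpha>' = \<alpha> \<and> \<beta>' = \<beta>) \<or> (\<alpha>' = \<beta> \<and> \<beta>' = \<alpha>)"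
    using mset_two[of "[\<alpha>', \<beta>']" \<alpha> \<beta>] by auto
  then show ?thesis using binom_sym[OF la] by auto
qed

lemma Gset_finite: "finite (Gset V \<tau> :: 'k::comm_ring_1 ypoly set)"
proof (rule finite_subset)
  show "Gset V \<tau> \<subseteq> (\<lambda>(\<alpha>, \<beta>). binom \<tau> \<alpha> \<beta>) ` (V \<times> V)"
    unfolding Gset_def nonsorted_quad_def by auto
  show "finite ((\<lambda>(\<alpha>, \<beta>). binom \<tau> \<alpha> \<beta> :: 'k ypoly) ` (V \<times> V))" using finV by simp
qed

lemma size2_sub: "size A = 2 \<Longrightarrow> size B = 2 \<Longrightarrow> A \<subseteq># B \<Longrightarrow> A = B"
  by (metis mset_subset_size subset_mset.le_less nat_less_le)

lemma groebner:
  "reduced_groebner_basis leo (toricIdeal V :: 'k::field ypoly set) (Gset V \<tau>)"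
  unfolding reduced_groebner_basis_def groebner_basis_def
proof (intro conjI)
  show "finite (Gset V \<tau> :: 'k ypoly set)" by (rule Gset_finite)
  show "(Gset V \<tau> :: 'k ypoly set) \<subseteq> toricIdeal V"
    unfolding Gset_def using binom_in_I by blast
  show "(0 :: 'k ypoly) \<notin> Gset V \<tau>"
  proof
    assume "(0 :: 'k ypoly) \<in> Gset V \<tau>"
    then obtain \<alpha> \<beta> where q: "nonsorted_quad V \<alpha> \<beta>" and z: "(0::'k ypoly) = binom \<tau> \<alpha> \<beta>"
      unfolding Gset_def by blast
    have "Poly_Mapping.lookup (binom \<tau> \<alpha> \<beta> :: 'k ypoly) {#\<alpha>, \<beta>#} = 1"
      using ns_ne[OF q] by (simp add: lookup_binom)
    then show False using z[symmetric] by simp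
  qed
  show "\<forall>f\<in>(toricIdeal V :: 'k ypoly set). f \<noteq> 0 \<longrightarrow> (\<exists>g\<in>(Gset V \<tau> :: 'k ypoly set). lm leo g \<subseteq># lm leo f)"
  proof (intro ballI impI)
    fix f :: "'k ypoly" assume fI: "f \<in> toricIdeal V" and f0: "f \<noteq> 0"
    have inky: "inKY V f" and pi0: "piY f = 0" using fI unfolding toricIdeal_def by auto
    have monx: "\<And>x. x \<in> Poly_Mapping.keys f \<Longrightarrow> set_mset x \<subseteq> V"
      using inky unfolding inKY_def is_monom_def by blast
    have kne: "Poly_Mapping.keys f \<noteq> {}" using f0 by simp
    have kfin: "finite (Poly_Mapping.keys f)" by simp
    let ?K = "key ` Poly_Mapping.keys f"
    have "Max ?K \<in> ?K" using kne kfin by (intro Max_in) auto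
    then obtain m where m: "m \<in> Poly_Mapping.keys f" "key m = Max ?K" by auto
    have mmax: "\<forall>m'\<in>Poly_Mapping.keys f. key m' \<le> key m" using m(2) kfin by simp
    have lmf: "lm leo f = m" by (rule lm_eq[OF m(1)]) (use mmax in \<open>simp add: leo_def\<close>)
    have other: "\<exists>m'\<in>Poly_Mapping.keys f. m' \<noteq> m \<and> Pm m' = Pm m"
    proof (rule ccontr)
      assume "\<not> ?thesis"
      then have no: "\<And>x. x \<in> Poly_Mapping.keys f \<Longrightarrow> x \<noteq> m \<Longrightarrow> Pm x \<noteq> Pm m" by blast
      have "Poly_Mapping.lookup (piY f) (Pm m)
          = (\<Sum>x\<in>Poly_Mapping.keys f. Poly_Mapping.lookup (Poly_Mapping.single (Pm x) (Poly_Mapping.lookup f x)) (Pm m))"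
        unfolding piY_def Pm_def by (simp add: lookup_sum)
      also have "\<dots> = (\<Sum>x\<in>Poly_Mapping.keys f. if x = m then Poly_Mapping.lookup f m else 0)"
        by (rule sum.cong) (use no in \<open>auto simp: lookup_single when_def\<close>)
      also have "\<dots> = Poly_Mapping.lookup f m" using m(1) kfin by simp
      finally have "Poly_Mapping.lookup f m = 0" using pi0 by simp
      then show False using m(1) by (simp add: in_keys_iff)
    qed
    then obtain m' where m': "m' \<in> Poly_Mapping.keys f" "m' \<noteq> m" "Pm m' = Pm m" by blast
    have lt: "key m' < key m" using mmax m' key_inj by (metis order_le_less)
    have nPS: "\<not> PS m"
    proof
      assume psm: "PS m"
      obtain s where s: "set_mset s \<subseteq> V" "PS s" "Pm s = Pm m'" "s = m' \<or> Wl d s m'"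
        using reduce[OF monx[OF m'(1)]] by blast
      have "s = m" by (rule PS_unique_V[OF s(1) monx[OF m(1)] s(2) psm]) (use s(3) m'(3) in simp)
      then have "Wl d m m'" using s(4) m'(2) by simp
      then have "key m < key m'" using m'(3) by (intro key_less_W) simp_all
      then show False using lt by simp
    qed
    obtain \<alpha> \<beta> where sub: "{#\<alpha>, \<beta>#} \<subseteq># m" and ns: "\<not> sorted_monom {#\<alpha>, \<beta>#}"
      using nPS unfolding PS_def by blast
    have "\<alpha> \<in># m" "\<beta> \<in># m" using sub by (auto dest: mset_subset_eqD)
    then have q: "nonsorted_quad V \<alpha> \<beta>" using monx[OF m(1)] ns unfolding nonsorted_quad_def by auto
    have "binom \<tau> \<alpha> \<beta> \<in> (Gset V \<tau> :: 'k ypoly set)" unfolding Gset_def using q by blast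
    moreover have "lm leo (binom \<tau> \<alpha> \<beta> :: 'k ypoly) \<subseteq># lm leo f" unfolding lmf lm_binom[OF q] by (rule sub)
    ultimately show "\<exists>g\<in>(Gset V \<tau> :: 'k ypoly set). lm leo g \<subseteq># lm leo f" by blast

  qed
  show "\<forall>g\<in>(Gset V \<tau> :: 'k ypoly set). Poly_Mapping.lookup g (lm leo g) = 1"
  proof
    fix g :: "'k ypoly" assume "g \<in> Gset V \<tau>"
    then obtain \<alpha> \<beta> where q: "nonsorted_quad V \<alpha> \<beta>" and g: "g = binom \<tau> \<alpha> \<beta>"
      unfolding Gset_def by blast
    show "Poly_Mapping.lookup g (lm leo g) = 1"
      unfolding g lm_binom[OF q] using ns_ne[OF q] by (simp add: lookup_binom)
  qed
  show "\<forall>g\<in>(Gset V \<tau> :: 'k ypoly set). \<forall>g'\<in>Gset V \<tau>. g \<noteq> g' \<longrightarrow> (\<forall>m\<in>Poly_Mapping.keys g. \<not> lm leo g' \<subseteq># m)"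
  proof (intro ballI)
    fix g g' :: "'k ypoly" assume gG: "g \<in> Gset V \<tau>" and g'G: "g' \<in> Gset V \<tau>"
    show "g \<noteq> g' \<longrightarrow> (\<forall>m\<in>Poly_Mapping.keys g. \<not> lm leo g' \<subseteq># m)"
    proof (intro impI ballI notI)
      assume ne: "g \<noteq> g'"
      fix m assume m: "m \<in> Poly_Mapping.keys g" and sub: "lm leo g' \<subseteq># m"
      obtain \<alpha> \<beta> where q: "nonsorted_quad V \<alpha> \<beta>" and g: "g = binom \<tau> \<alpha> \<beta>"
        using gG unfolding Gset_def by blast
      obtain \<alpha>' \<beta>' where q': "nonsorted_quad V \<alpha>' \<beta>'" and g': "g' = binom \<tau> \<alpha>' \<beta>'"
        using g'G unfolding Gset_def by blast
      have lm': "lm leo g' = {#\<alpha>', \<beta>'#}" unfolding g' by (rule lm_binom[OF q'])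
      have ms: "m = {#\<alpha>, \<beta>#} \<or> m = {#oddpart \<tau> \<alpha> \<beta>, evenpart \<tau> \<alpha> \<beta>#}"
        using m unfolding g keys_binom[OF q] by simp
      then have "size m = 2" by auto
      then have eqm: "{#\<alpha>', \<beta>'#} = m" using sub lm' by (intro size2_sub) auto
      from ms show False
      proof
        assume "m = {#\<alpha>, \<beta>#}"
        then have "g' = g" unfolding g g' using binom_eq[OF q] eqm by simp
        then show False using ne by simp
      next
        assume "m = {#oddpart \<tau> \<alpha> \<beta>, evenpart \<tau> \<alpha> \<beta>#}"
        moreover have "length \<alpha> = \<tau>" "length \<beta> = \<tau>" using good ns_V[OF q] by auto
        ultimately have "sorted_monom {#\<alpha>', \<beta>'#}" using eqm oe_sorted_monom by simp
        then show False using q' unfolding nonsorted_quad_def by simp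
      qed
    qed
  qed
qed

end


lemma sorted_mset_eq: "sorted u \<Longrightarrow> sorted v \<Longrightarrow> mset u = mset v \<Longrightarrow> u = v"
  by (metis properties_for_sort sorted_sort_id)

context tor
begin

definition vec :: "nat list multiset \<Rightarrow> nat list \<Rightarrow> int" where
  "vec m = (\<lambda>v. int (count m v))"

lemma Amap_vec: "set_mset m \<subseteq> V \<Longrightarrow> Amap V (vec m) = (\<lambda>j. int (count (Pm m) j))"
proof (induction m)
  case empty
  then show ?case by (simp add: Amap_def vec_def Pm_def)
next
  case (add x m)
  have xV: "x \<in> V" and mV: "set_mset m \<subseteq> V" using add.prems by auto
  show ?case
  proof
    fix j
    have "Amap V (vec (add_mset x m)) j
        = (\<Sum>v\<in>V. int (count m v) * int (expvec v j)) + (\<Sum>v\<in>V. if v = x then int (expvec v j) else 0)"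
      unfolding Amap_def vec_def sum.distrib[symmetric] by (rule sum.cong) (auto simp: algebra_simps)
    also have "\<dots> = Amap V (vec m) j + int (expvec x j)"
      using xV finV by (simp add: Amap_def vec_def)
    also have "\<dots> = int (count (Pm (add_mset x m)) j)"
      using add.IH[OF mV] by (simp add: Pm_def expvec_def)
    finally show "Amap V (vec (add_mset x m)) j = int (count (Pm (add_mset x m)) j)" .
  qed
qed

definition mono :: "(nat list \<Rightarrow> int) \<Rightarrow> nat list multiset" where
  "mono x = (\<Sum>v\<in>V. replicate_mset (nat (x v)) v)"

lemma count_mono: "count (mono x) u = (if u \<in> V then nat (x u) else 0)"
  unfolding mono_def using finV by (simp add: count_sum count_replicate_mset)

lemma fiber_mono:
  assumes "x \<in> fiber V t"
  shows "vec (mono x) = x" "set_mset (mono x) \<subseteq> V"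
proof -
  show "vec (mono x) = x"
    using assms unfolding fiber_def vec_def by (auto simp: count_mono)
  show "set_mset (mono x) \<subseteq> V" by (auto simp: count_mono simp flip: count_greater_zero_iff split: if_splits)
qed

lemma vec_fiber: "set_mset m \<subseteq> V \<Longrightarrow> vec m \<in> fiber V (Amap V (vec m))"
  unfolding fiber_def vec_def by (auto simp flip: count_greater_zero_iff)

lemma vec_inj: "vec m1 = vec m2 \<Longrightarrow> m1 = m2"
  unfolding vec_def by (metis multiset_eqI of_nat_eq_iff)

lemma Amap_Pm: "set_mset m1 \<subseteq> V \<Longrightarrow> set_mset m2 \<subseteq> V \<Longrightarrow> Pm m1 = Pm m2 \<Longrightarrow> Amap V (vec m1) = Amap V (vec m2)"
  by (simp add: Amap_vec)

lemma step_ms: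
  assumes mV: "set_mset m \<subseteq> V" and st: "step V \<tau> m m'"
  shows "(vec m, vec m') \<in> markov_step V (Amap V (vec m)) (Bset V \<tau>)"
proof -
  obtain A \<alpha> \<beta> where q: "nonsorted_quad V \<alpha> \<beta>" and m: "m = A + {#\<alpha>, \<beta>#}"
    and m': "m' = A + {#oddpart \<tau> \<alpha> \<beta>, evenpart \<tau> \<alpha> \<beta>#}"
    using st unfolding step_def by blast
  note sp = step_props[OF mV st]
  have f1: "vec m \<in> fiber V (Amap V (vec m))" by (rule vec_fiber[OF mV])
  have f2: "vec m' \<in> fiber V (Amap V (vec m))"
    using vec_fiber[OF sp(1)] Amap_Pm[OF sp(1) mV sp(2)] by simp
  have zB: "binom_move \<tau> \<alpha> \<beta> \<in> Bset V \<tau>" unfolding Bset_def using q by blast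
  have "vec m' = (\<lambda>v. vec m v - binom_move \<tau> \<alpha> \<beta> v)"
    unfolding m m' vec_def binom_move_def by (auto simp: algebra_simps)
  then show ?thesis unfolding markov_step_def using f1 f2 zB by blast
qed

lemma steps_ms:
  assumes mV: "set_mset m \<subseteq> V" and st: "(step V \<tau>)\<^sup>*\<^sup>* m s"
  shows "(vec m, vec s) \<in> (markov_step V (Amap V (vec m)) (Bset V \<tau>))\<^sup>*"
proof -
  have "set_mset s \<subseteq> V \<and> Pm s = Pm m \<and> (vec m, vec s) \<in> (markov_step V (Amap V (vec m)) (Bset V \<tau>))\<^sup>*"
    using st
  proof (induction rule: rtranclp_induct)
    case base then show ?case using mV by simp
  next
    case (step y z)
    have yV: "set_mset y \<subseteq> V" and Py: "Pm y = Pm m" using step.IH by auto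
    note sp = step_props[OF yV step.hyps(2)]
    have "(vec y, vec z) \<in> markov_step V (Amap V (vec y)) (Bset V \<tau>)" by (rule step_ms[OF yV step.hyps(2)])
    moreover have "Amap V (vec y) = Amap V (vec m)" by (rule Amap_Pm[OF yV mV Py])
    ultimately have "(vec y, vec z) \<in> markov_step V (Amap V (vec m)) (Bset V \<tau>)" by simp
    then show ?case using step.IH sp by (auto intro: rtrancl_into_rtrancl)
  qed
  then show ?thesis by blast
qed

lemma ms_sym: "sym (markov_step V t B)"
proof (rule symI)
  fix a b assume "(a, b) \<in> markov_step V t B"
  then obtain z where z: "z \<in> B" "b = (\<lambda>v. a v + z v) \<or> b = (\<lambda>v. a v - z v)"
    and ab: "a \<in> fiber V t" "b \<in> fiber V t" unfolding markov_step_def by blast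
  from z(2) have "a = (\<lambda>v. b v - z v) \<or> a = (\<lambda>v. b v + z v)" by auto
  then show "(b, a) \<in> markov_step V t B" unfolding markov_step_def using z(1) ab by blast
qed

lemma binom_move_sym: "length \<alpha> = length \<beta> \<Longrightarrow> binom_move \<tau> \<beta> \<alpha> = binom_move \<tau> \<alpha> \<beta>"
  by (simp add: binom_move_def oddpart_sym[of \<alpha> \<beta>] evenpart_sym[of \<alpha> \<beta>] add_mset_commute)

lemma binom_move_eq:
  assumes "nonsorted_quad V \<alpha> \<beta>" "{#\<alpha>', \<beta>'#} = {#\<alpha>, \<beta>#}"
  shows "binom_move \<tau> \<alpha>' \<beta>' = binom_move \<tau> \<alpha> \<beta>"
proof -
  have la: "length \<alpha> = length \<beta>" using good ns_V[OF assms(1)] by auto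
  from assms(2) have "(\<alpha>' = \<alpha> \<and> \<beta>' = \<beta>) \<or> (\<alpha>' = \<beta> \<and> \<beta>' = \<alpha>)"
    using mset_two[of "[\<alpha>', \<beta>']" \<alpha> \<beta>] by auto
  then show ?thesis using binom_move_sym[OF la] by auto
qed

lemma is_move_B: "z \<in> Bset V \<tau> \<Longrightarrow> is_move V z"
proof -
  assume "z \<in> Bset V \<tau>"
  then obtain \<alpha> \<beta> where q: "nonsorted_quad V \<alpha> \<beta>" and z: "z = binom_move \<tau> \<alpha> \<beta>"
    unfolding Bset_def by blast
  have ab: "\<alpha> \<in> V" "\<beta> \<in> V" using ns_V[OF q] by auto
  have oe: "oddpart \<tau> \<alpha> \<beta> \<in> V" "evenpart \<tau> \<alpha> \<beta> \<in> V" using clos[OF ab] by auto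
  have sA: "set_mset {#\<alpha>, \<beta>#} \<subseteq> V" and sB: "set_mset {#oddpart \<tau> \<alpha> \<beta>, evenpart \<tau> \<alpha> \<beta>#} \<subseteq> V"
    using ab oe by auto
  have la: "length \<alpha> = \<tau>" "length \<beta> = \<tau>" using good ab by auto
  have PP: "Pm {#oddpart \<tau> \<alpha> \<beta>, evenpart \<tau> \<alpha> \<beta>#} = Pm {#\<alpha>, \<beta>#}"
    using oe_mset[OF la] by (simp add: Pm_pair)
  have zz: "z = (\<lambda>v. vec {#\<alpha>, \<beta>#} v - vec {#oddpart \<tau> \<alpha> \<beta>, evenpart \<tau> \<alpha> \<beta>#} v)"
    unfolding z binom_move_def vec_def by simp
  have "Amap V z = (\<lambda>j. Amap V (vec {#\<alpha>, \<beta>#}) j - Amap V (vec {#oddpart \<tau> \<alpha> \<beta>, evenpart \<tau> \<alpha> \<beta>#}) j)"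
    unfolding zz Amap_def by (simp add: left_diff_distrib sum_subtractf)
  also have "\<dots> = (\<lambda>_. 0)" using Amap_Pm[OF sA sB PP[symmetric]] by simp
  finally have "Amap V z = (\<lambda>_. 0)" .
  moreover have "\<forall>v. v \<notin> V \<longrightarrow> z v = 0"
    using ab oe unfolding z binom_move_def by auto
  ultimately show ?thesis unfolding is_move_def by simp
qed

lemma Bset_finite: "finite (Bset V \<tau>)"
proof (rule finite_subset)
  show "Bset V \<tau> \<subseteq> (\<lambda>(\<alpha>, \<beta>). binom_move \<tau> \<alpha> \<beta>) ` (V \<times> V)"
    unfolding Bset_def nonsorted_quad_def by auto
  show "finite ((\<lambda>(\<alpha>, \<beta>). binom_move \<tau> \<alpha> \<beta>) ` (V \<times> V))" using finV by simp
qed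

lemma markov: "markov_basis V (Bset V \<tau>)"
  unfolding markov_basis_def
proof (intro conjI ballI allI)
  show "finite (Bset V \<tau>)" by (rule Bset_finite)
  fix z assume "z \<in> Bset V \<tau>" then show "is_move V z" by (rule is_move_B)
next
  fix t x y assume x: "x \<in> fiber V t" and y: "y \<in> fiber V t"
  let ?R = "markov_step V t (Bset V \<tau>)"
  note fx = fiber_mono[OF x] and fy = fiber_mono[OF y]
  obtain sx where sx: "set_mset sx \<subseteq> V" "PS sx" "Pm sx = Pm (mono x)" "(step V \<tau>)\<^sup>*\<^sup>* (mono x) sx"
    using reduce[OF fx(2)] by blast
  obtain sy where sy: "set_mset sy \<subseteq> V" "PS sy" "Pm sy = Pm (mono y)" "(step V \<tau>)\<^sup>*\<^sup>* (mono y) sy"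
    using reduce[OF fy(2)] by blast
  have tx: "Amap V (vec (mono x)) = t" using x fx(1) unfolding fiber_def by simp
  have ty: "Amap V (vec (mono y)) = t" using y fy(1) unfolding fiber_def by simp
  have "Pm (mono x) = Pm (mono y)"
  proof (rule multiset_eqI)
    fix j
    have "int (count (Pm (mono x)) j) = t j" using Amap_vec[OF fx(2)] tx by metis
    moreover have "int (count (Pm (mono y)) j) = t j" using Amap_vec[OF fy(2)] ty by metis
    ultimately show "count (Pm (mono x)) j = count (Pm (mono y)) j" by simp
  qed
  then have "sx = sy" using PS_unique_V[OF sx(1) sy(1) sx(2) sy(2)] sx(3) sy(3) by simp
  have 1: "(x, vec sx) \<in> ?R\<^sup>*" using steps_ms[OF fx(2) sx(4)] fx(1) tx by simp
  have 2: "(y, vec sx) \<in> ?R\<^sup>*" using steps_ms[OF fy(2) sy(4)] fy(1) ty \<open>sx = sy\<close> by simp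
  have 3: "(vec sx, y) \<in> ?R\<^sup>*" using 2 sym_rtrancl[OF ms_sym] by (meson symD)
  show "(x, y) \<in> ?R\<^sup>*" using 1 3 by (rule rtrancl_trans)
qed

lemma disj_AB:
  assumes q: "nonsorted_quad V \<alpha> \<beta>" and v: "v \<in># {#\<alpha>, \<beta>#}"
  shows "v \<notin># {#oddpart \<tau> \<alpha> \<beta>, evenpart \<tau> \<alpha> \<beta>#}"
proof
  assume vo: "v \<in># {#oddpart \<tau> \<alpha> \<beta>, evenpart \<tau> \<alpha> \<beta>#}"
  have ab: "\<alpha> \<in> V" "\<beta> \<in> V" using ns_V[OF q] by auto
  have la: "length \<alpha> = \<tau>" "length \<beta> = \<tau>" and sa: "sorted \<alpha>" "sorted \<beta>" using good ab by auto
  have so: "sorted (oddpart \<tau> \<alpha> \<beta>)" "sorted (evenpart \<tau> \<alpha> \<beta>)" using oe_sorted[OF la] by auto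
  have me: "mset (oddpart \<tau> \<alpha> \<beta>) + mset (evenpart \<tau> \<alpha> \<beta>) = mset \<alpha> + mset \<beta>" by (rule oe_mset[OF la])
  have ne: "{#\<alpha>, \<beta>#} \<noteq> {#oddpart \<tau> \<alpha> \<beta>, evenpart \<tau> \<alpha> \<beta>#}" by (rule ns_ne[OF q])
  from v vo have "(v = \<alpha> \<or> v = \<beta>) \<and> (v = oddpart \<tau> \<alpha> \<beta> \<or> v = evenpart \<tau> \<alpha> \<beta>)" by auto
  then show False
  proof (elim conjE disjE)
    assume "v = \<alpha>" "v = oddpart \<tau> \<alpha> \<beta>"
    then have "mset (evenpart \<tau> \<alpha> \<beta>) = mset \<beta>" using me by simp
    then have "evenpart \<tau> \<alpha> \<beta> = \<beta>" using sorted_mset_eq so sa by blast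
    then show False using ne \<open>v = \<alpha>\<close> \<open>v = oddpart \<tau> \<alpha> \<beta>\<close> by simp
  next
    assume "v = \<alpha>" "v = evenpart \<tau> \<alpha> \<beta>"
    then have "mset (oddpart \<tau> \<alpha> \<beta>) = mset \<beta>" using me by simp
    then have "oddpart \<tau> \<alpha> \<beta> = \<beta>" using sorted_mset_eq so sa by blast
    then show False using ne \<open>v = \<alpha>\<close> \<open>v = evenpart \<tau> \<alpha> \<beta>\<close> by (simp add: add_mset_commute)
  next
    assume "v = \<beta>" "v = oddpart \<tau> \<alpha> \<beta>"
    then have "mset (evenpart \<tau> \<alpha> \<beta>) = mset \<alpha>" using me by (simp add: add.commute)
    then have "evenpart \<tau> \<alpha> \<beta> = \<alpha>" using sorted_mset_eq so sa by blast
    then show False using ne \<open>v = \<beta>\<close> \<open>v = oddpart \<tau> \<alpha> \<beta>\<close> by (simp add: add_mset_commute)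
  next
    assume "v = \<beta>" "v = evenpart \<tau> \<alpha> \<beta>"
    then have "mset (oddpart \<tau> \<alpha> \<beta>) = mset \<alpha>" using me by (simp add: add.commute)
    then have "oddpart \<tau> \<alpha> \<beta> = \<alpha>" using sorted_mset_eq so sa by blast
    then show False using ne \<open>v = \<beta>\<close> \<open>v = evenpart \<tau> \<alpha> \<beta>\<close> by simp
  qed
qed

lemma minimal: "minimal_markov_basis V (Bset V \<tau>)"
  unfolding minimal_markov_basis_def
proof (intro conjI allI impI notI)
  show "markov_basis V (Bset V \<tau>)" by (rule markov)
  fix B' assume sub: "B' \<subset> Bset V \<tau>" and mb: "markov_basis V B'"
  obtain z where z: "z \<in> Bset V \<tau>" "z \<notin> B'" using sub by blast
  then obtain \<alpha> \<beta> where q: "nonsorted_quad V \<alpha> \<beta>" and zd: "z = binom_move \<tau> \<alpha> \<beta>"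
    unfolding Bset_def by blast
  define A where "A = {#\<alpha>, \<beta>#}"
  define B where "B = {#oddpart \<tau> \<alpha> \<beta>, evenpart \<tau> \<alpha> \<beta>#}"
  have ab: "\<alpha> \<in> V" "\<beta> \<in> V" using ns_V[OF q] by auto
  have oe: "oddpart \<tau> \<alpha> \<beta> \<in> V" "evenpart \<tau> \<alpha> \<beta> \<in> V" using clos[OF ab] by auto
  have sA: "set_mset A \<subseteq> V" and sB: "set_mset B \<subseteq> V" unfolding A_def B_def using ab oe by auto
  have la: "length \<alpha> = \<tau>" "length \<beta> = \<tau>" using good ab by auto
  have PP: "Pm B = Pm A" unfolding A_def B_def using oe_mset[OF la] by (simp add: Pm_pair)
  define t where "t = Amap V (vec A)"
  have xf: "vec A \<in> fiber V t" unfolding t_def by (rule vec_fiber[OF sA])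
  have yf: "vec B \<in> fiber V t" unfolding t_def using vec_fiber[OF sB] Amap_Pm[OF sB sA PP] by simp
  have "(vec A, vec B) \<in> (markov_step V t B')\<^sup>*" using mb xf yf unfolding markov_basis_def by blast
  moreover have "vec A \<noteq> vec B" using ns_ne[OF q] vec_inj unfolding A_def B_def by blast
  ultimately obtain x1 where x1: "(vec A, x1) \<in> markov_step V t B'"
    by (metis converse_rtranclE)
  then obtain z' where z': "z' \<in> B'" "x1 = (\<lambda>v. vec A v + z' v) \<or> x1 = (\<lambda>v. vec A v - z' v)"
    and x1f: "x1 \<in> fiber V t" unfolding markov_step_def by blast
  have nonneg: "\<And>v. 0 \<le> x1 v" using x1f unfolding fiber_def by blast
  have "z' \<in> Bset V \<tau>" using z'(1) sub by blast
  then obtain \<alpha>' \<beta>' where q': "nonsorted_quad V \<alpha>' \<beta>'" and zd': "z' = binom_move \<tau> \<alpha>' \<beta>'"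
    unfolding Bset_def by blast
  define A' where "A' = {#\<alpha>', \<beta>'#}"
  define B'' where "B'' = {#oddpart \<tau> \<alpha>' \<beta>', evenpart \<tau> \<alpha>' \<beta>'#}"
  have z'v: "z' v = int (count A' v) - int (count B'' v)" for v
    unfolding zd' binom_move_def A'_def B''_def by simp
  have dis: "\<And>v. v \<in># A' \<Longrightarrow> count B'' v = 0"
    using disj_AB[OF q'] unfolding A'_def B''_def by (metis count_eq_zero_iff)
  have dis2: "\<And>v. v \<in># B'' \<Longrightarrow> count A' v = 0"
    using disj_AB[OF q'] unfolding A'_def B''_def by (metis count_eq_zero_iff)
  have sizeA: "size A = 2" "size A' = 2" "size B'' = 2" unfolding A_def A'_def B''_def by auto
  from z'(2) show False
  proof
    assume e: "x1 = (\<lambda>v. vec A v - z' v)"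
    have "A' \<subseteq># A"
    proof (rule mset_subset_eqI)
      fix v show "count A' v \<le> count A v"
      proof (cases "v \<in># A'")
        case True
        have "0 \<le> x1 v" by (rule nonneg)
        then show ?thesis using dis[OF True] unfolding e z'v vec_def by simp
      next
        case False then show ?thesis by (simp add: not_in_iff)
      qed
    qed
    then have "A' = A" using sizeA by (intro size2_sub) auto
    then have "z' = z" unfolding zd zd' A'_def A_def by (rule binom_move_eq[OF q])
    then show False using z z'(1) by simp
  next
    assume e: "x1 = (\<lambda>v. vec A v + z' v)"
    have "B'' \<subseteq># A"
    proof (rule mset_subset_eqI)
      fix v show "count B'' v \<le> count A v"
      proof (cases "v \<in># B''")
        case True
        have "0 \<le> x1 v" by (rule nonneg)
        then show ?thesis using dis2[OF True] unfolding e z'v vec_def by simp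
      next
        case False then show ?thesis by (simp add: not_in_iff)
      qed
    qed
    then have "B'' = A" using sizeA by (intro size2_sub) auto
    moreover have "length \<alpha>' = \<tau>" "length \<beta>' = \<tau>" using good ns_V[OF q'] by auto
    ultimately have "sorted_monom A" unfolding B''_def using oe_sorted_monom by metis
    then show False using q unfolding A_def nonsorted_quad_def by simp
  qed
qed

end


theorem theorem1:
  fixes \<tau> M d :: nat and b c :: "nat \<Rightarrow> int" and r s :: "nat \<Rightarrow> nat"
  assumes "\<tau> \<ge> 2" and "M \<ge> 1" and "d \<ge> 1"
    and "\<forall>i\<in>{1..M}. 0 \<le> c i \<and> c i \<le> b i"
    and "\<forall>i\<in>{1..M}. 1 \<le> s i \<and> s i \<le> r i \<and> r i \<le> d"
  shows "let V = Vars d \<tau> M b c r s in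
    \<exists>le. monomial_order V le \<and>
      reduced_groebner_basis le (toricIdeal V :: ('k::field) ypoly set) (Gset V \<tau>) \<and>
      (\<forall>\<alpha> \<beta>. nonsorted_quad V \<alpha> \<beta> \<longrightarrow> lm le (binom \<tau> \<alpha> \<beta> :: 'k ypoly) = {#\<alpha>, \<beta>#}) \<and>
      minimal_markov_basis V (Bset V \<tau>)"
proof -
  define V where "V = Vars d \<tau> M b c r s"
  interpret tor V \<tau> d
  proof
    fix v assume "v \<in> V"
    then show "length v = \<tau> \<and> sorted v \<and> set v \<subseteq> {1..d}" unfolding V_def by (rule Vars_good)
  next
    fix \<alpha> \<beta> assume "\<alpha> \<in> V" "\<beta> \<in> V"
    then show "oddpart \<tau> \<alpha> \<beta> \<in> V \<and> evenpart \<tau> \<alpha> \<beta> \<in> V"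
      unfolding V_def using oe_Vars assms(5) by blast
  next
    show "\<tau> \<ge> 1" using assms(1) by simp
    show "finite V" unfolding V_def by (rule Vars_finite)
  qed
  have "monomial_order V leo \<and>
      reduced_groebner_basis leo (toricIdeal V :: ('k::field) ypoly set) (Gset V \<tau>) \<and>
      (\<forall>\<alpha> \<beta>. nonsorted_quad V \<alpha> \<beta> \<longrightarrow> lm leo (binom \<tau> \<alpha> \<beta> :: 'k ypoly) = {#\<alpha>, \<beta>#}) \<and>
      minimal_markov_basis V (Bset V \<tau>)"
    using mono_order groebner lm_binom minimal by blast
  then show ?thesis unfolding Let_def V_def[symmetric] by blast
qed

end
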